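(* Let $V+Z\in\mathfrak v\oplus\mathfrak z$ with $Z=Z_c$ satisfy the genericity condition ($|c|>|c_k|>0$ and $V_{c_k}\neq0$, $V_{|c|}\neq0$, $V_0\neq0$). Let $\gamma:\mathbb R\to N$ (resp. $N'$) be a geodesic with $\dot\gamma(0)=((v,z),V+Z)$, let $\tau>0$, and assume $\dot\gamma(\tau)=(\gamma(\tau),V+Z)$. Write $V_0=\beta Y(Z)$, $V_\perp:=V_{c_k}+V_{|c|}=\sum_{m=1}^4\alpha_mE_m(Z)$ in the case of $N$ (resp. $=\sum_{m=1}^4\alpha'_mE'_m(Z)$ in the case of $N'$), and $v=x_iX_i+x_jX_j+y_iY_i+y_jY_j+y_kY_k$. Then $\tau c_k\in2\pi\mathbb Z$, $\tau|c|\in2\pi\mathbb Z$, and the translational element $a:=\gamma(\tau)\gamma(0)^{-1}$ equals, in $N$, $$\Bigl(\tau V_0,\ \tau\bigl(1+\tfrac{|V_\perp|^2}{2|c|^2}\bigr)Z_c+\tau\beta\bigl(\alpha_2-\tfrac{c_k}{c_i^2+c_j^2}(x_ic_i+x_jc_j)\bigr)(-c_jZ_i+c_iZ_j)+\tau\Bigl(-\tfrac{|V_{c_k}|^2}{2c_k|c|^2}+\beta\bigl(\alpha_4-\tfrac{1}{c_i^2+c_j^2}(x_ic_j-x_jc_i)\bigr)\Bigr)\bigl(c_k(c_iZ_i+c_jZ_j)-(c_i^2+c_j^2)Z_k\bigr)\Bigr),$$ and, in $N'$, $$\Bigl(\tau V_0,\ \tau\bigl(1+\tfrac{|V_\pe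rp|^2}{2|c|^2}\bigr)Z_c+\tau\beta\bigl(-|c|\alpha'_3+y_k-\tfrac{c_k}{c_i^2+c_j^2}(y_ic_i+y_jc_j)\bigr)(-c_jZ_i+c_iZ_j)+\tau\Bigl(-\tfrac{|V_{c_k}|^2}{2c_k|c|^2}+\beta\bigl(\alpha'_4-\tfrac{1}{c_i^2+c_j^2}(y_ic_j-y_jc_i)\bigr)\Bigr)\bigl(c_k(c_iZ_i+c_jZ_j)-(c_i^2+c_j^2)Z_k\bigr)\Bigr).$$
   Context: $\mathfrak v$ has orthonormal basis $X_i,X_j,Y_i,Y_j,Y_k$, $\mathfrak z$ orthonormal basis $Z_i,Z_j,Z_k$; on the orthogonal sum $\mathfrak v\oplus\mathfrak z$ two two-step nilpotent brackets ($\mathfrak z$ central, $[\mathfrak v,\mathfrak v]\subseteq\mathfrak z$) are given: $[\,,]$ with only nonzero basis brackets (up to antisymmetry) $[X_i,Y_j]=Z_k$, $[X_i,Y_k]=-Z_j$, $[X_j,Y_i]=-Z_k$, $[X_j,Y_k]=Z_i$; and $[\,,]'$ with $[X_i,X_j]'=Z_k$, $[Y_i,Y_j]'=Z_k$, $[Y_j,Y_k]'=Z_i$, $[Y_k,Y_i]'=Z_j$. $j,j':\mathfrak z\to\mathfrak{so}(\mathfrak v)$ are defined by $\langle j(Z)X,Y\rangle=\langle Z,[X,Y]\rangle$ and similarly for $j'$. $N,N'$ are the corresponding simply connected Lie groups with left invariant metrics $g,g'$ given by the inner product. Elements are written $(v,z):=\exp(v+z)$, with $(v,z)(\bar v,\bar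 z)=(v+\bar v,z+\bar z+\tfrac12[v,\bar v])$ (resp. $[\,,]'$); tangent vectors are written $(p,A)$ with $A=L_{p*}^{-1}X\in\mathfrak v\oplus\mathfrak z$. For $Z=Z_c=c_iZ_i+c_jZ_j+c_kZ_k$ and $V\in\mathfrak v$, $V_\lambda$ denotes the component of $V$ in the $(-\lambda^2)$-eigenspace of $j(Z)^2$ (resp. $j'(Z)^2$), so $V=V_{c_k}+V_{|c|}+V_0$ when $|c|>|c_k|>0$. Set $Y(Z)=c_iY_i+c_jY_j+c_kY_k$; $E_1(Z)=c_iX_i+c_jX_j$, $E_2(Z)=-c_jY_i+c_iY_j$, $E_3(Z)=|c|(c_jX_i-c_iX_j)$, $E_4(Z)=c_k(c_iY_i+c_jY_j)-(c_i^2+c_j^2)Y_k$; $E'_1(Z)=X_i$, $E'_2(Z)=X_j$, $E'_3(Z)=|c|(c_jY_i-c_iY_j)$, $E'_4(Z)=c_k(c_iY_i+c_jY_j)-(c_i^2+c_j^2)Y_k$. *)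

theory Defs
  imports "HOL-Analysis.Analysis"
begin

text \<open>Model.  v = real^5 with orthonormal basis (index order) X_i, X_j, Y_i, Y_j, Y_k;
  z = real^3 with orthonormal basis Z_i, Z_j, Z_k.  The inner product is the standard one
  (the bases are orthonormal), and v (+) z is the product space real^5 * real^3 with the
  orthogonal-sum inner product.  A point (v,z) of N stands for exp(v+z).\<close>

type_synonym vsp = "real^5"
type_synonym zsp = "real^3"

text \<open>The bracket of N, given on basis vectors by
  [X_i,Y_j]=Z_k, [X_i,Y_k]=-Z_j, [X_j,Y_i]=-Z_k, [X_j,Y_k]=Z_i, extended bilinearly and antisymmetrically.\<close>
definition brN :: "vsp \<Rightarrow> vsp \<Rightarrow> zsp" where
  "brN a b = vector
     [ a$2 * b$5 - a$5 * b$2,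
       - (a$1 * b$5 - a$5 * b$1),
       (a$1 * b$4 - a$4 * b$1) - (a$2 * b$3 - a$3 * b$2) ]"

text \<open>The bracket of N', given by
  [X_i,X_j]'=Z_k, [Y_i,Y_j]'=Z_k, [Y_j,Y_k]'=Z_i, [Y_k,Y_i]'=Z_j.\<close>
definition brN' :: "vsp \<Rightarrow> vsp \<Rightarrow> zsp" where
  "brN' a b = vector
     [ a$4 * b$5 - a$5 * b$4,
       a$5 * b$3 - a$3 * b$5,
       (a$1 * b$2 - a$2 * b$1) + (a$3 * b$4 - a$4 * b$3) ]"

definition gmult :: "(vsp \<Rightarrow> vsp \<Rightarrow> zsp) \<Rightarrow> vsp \<times> zsp \<Rightarrow> vsp \<times> zsp \<Rightarrow> vsp \<times> zsp" where
  "gmult br p q = (fst p + fst q, snd p + snd q + (1/2) *\<^sub>R br (fst p) (fst q))"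

definition ginv :: "vsp \<times> zsp \<Rightarrow> vsp \<times> zsp" where
  "ginv p = (- fst p, - snd p)"

definition lbr :: "(vsp \<Rightarrow> vsp \<Rightarrow> zsp) \<Rightarrow> vsp \<times> zsp \<Rightarrow> vsp \<times> zsp \<Rightarrow> vsp \<times> zsp" where
  "lbr br A B = (0, br (fst A) (fst B))"

definition jmap :: "(vsp \<Rightarrow> vsp \<Rightarrow> zsp) \<Rightarrow> zsp \<Rightarrow> vsp \<Rightarrow> vsp" where
  "jmap br Z X = (THE W. \<forall>Y. inner W Y = inner Z (br X Y))"

text \<open>V_lambda: the component of V in the (-lambda^2)-eigenspace of j(Z)^2, i.e. the
  orthogonal projection of V onto that eigenspace (j(Z)^2 is symmetric, so the eigenspace
  decomposition is orthogonal).\<close>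
definition eigsp :: "(vsp \<Rightarrow> vsp \<Rightarrow> zsp) \<Rightarrow> zsp \<Rightarrow> real \<Rightarrow> vsp set" where
  "eigsp br Z l = {W. jmap br Z (jmap br Z W) = - (l^2) *\<^sub>R W}"

definition Vcomp :: "(vsp \<Rightarrow> vsp \<Rightarrow> zsp) \<Rightarrow> zsp \<Rightarrow> real \<Rightarrow> vsp \<Rightarrow> vsp" where
  "Vcomp br Z l V = (THE W. W \<in> eigsp br Z l \<and> (\<forall>U \<in> eigsp br Z l. inner (V - W) U = 0))"

text \<open>Left translation differential: d(L_p)_e (u,w) = (u, w + 1/2 [fst p, u]).
  The left-trivialized representative A = L_{p*}^{-1} X of a coordinate tangent vector X at p.\<close>
definition triv :: "(vsp \<Rightarrow> vsp \<Rightarrow> zsp) \<Rightarrow> vsp \<times> zsp \<Rightarrow> vsp \<times> zsp \<Rightarrow> vsp \<times> zsp" where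
  "triv br p X = (fst X, snd X - (1/2) *\<^sub>R br (fst p) (fst X))"

text \<open>Left-trivialized velocity of a curve: gamma-dot(t) = (gamma(t), vel br gamma t).\<close>
definition vel :: "(vsp \<Rightarrow> vsp \<Rightarrow> zsp) \<Rightarrow> (real \<Rightarrow> vsp \<times> zsp) \<Rightarrow> real \<Rightarrow> vsp \<times> zsp" where
  "vel br \<gamma> t = triv br (\<gamma> t) (vector_derivative \<gamma> (at t))"

text \<open>ad_X^* (adjoint w.r.t. the inner product) and the Levi-Civita connection of the
  left-invariant metric on left-invariant fields (Koszul formula):
  nabla_X Y = 1/2([X,Y] - ad_X^* Y - ad_Y^* X).\<close>
definition adstar :: "(vsp \<Rightarrow> vsp \<Rightarrow> zsp) \<Rightarrow> vsp \<times> zsp \<Rightarrow> vsp \<times> zsp \<Rightarrow> vsp \<times> zsp" where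
  "adstar br X Y = (THE W. \<forall>U. inner W U = inner Y (lbr br X U))"

definition lcconn :: "(vsp \<Rightarrow> vsp \<Rightarrow> zsp) \<Rightarrow> vsp \<times> zsp \<Rightarrow> vsp \<times> zsp \<Rightarrow> vsp \<times> zsp" where
  "lcconn br X Y = (1/2) *\<^sub>R (lbr br X Y - adstar br X Y - adstar br Y X)"

text \<open>Geodesic of the left-invariant metric: a differentiable curve whose covariant
  acceleration vanishes.  Writing gamma' = sum a_m(t) E_m in a left-invariant orthonormal
  frame, D_t gamma' = A'(t) + nabla_{A(t)} A(t) with A(t) the left-trivialized velocity.\<close>
definition geodesic :: "(vsp \<Rightarrow> vsp \<Rightarrow> zsp) \<Rightarrow> (real \<Rightarrow> vsp \<times> zsp) \<Rightarrow> bool" where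
  "geodesic br \<gamma> \<longleftrightarrow>
     (\<forall>t. \<gamma> differentiable (at t)) \<and>
     (\<forall>t. (vel br \<gamma> has_vector_derivative (- lcconn br (vel br \<gamma> t) (vel br \<gamma> t))) (at t))"

definition Zc :: "real \<Rightarrow> real \<Rightarrow> real \<Rightarrow> zsp" where
  "Zc ci cj ck = vector [ci, cj, ck]"

definition Yv :: "real \<Rightarrow> real \<Rightarrow> real \<Rightarrow> vsp" where
  "Yv ci cj ck = vector [0, 0, ci, cj, ck]"

definition E1 :: "real \<Rightarrow> real \<Rightarrow> real \<Rightarrow> vsp" where
  "E1 ci cj ck = vector [ci, cj, 0, 0, 0]"
definition E2 :: "real \<Rightarrow> real \<Rightarrow> real \<Rightarrow> vsp" where
  "E2 ci cj ck = vector [0, 0, - cj, ci, 0]"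
definition E3 :: "real \<Rightarrow> real \<Rightarrow> real \<Rightarrow> vsp" where
  "E3 ci cj ck = norm (Zc ci cj ck) *\<^sub>R vector [cj, - ci, 0, 0, 0]"
definition E4 :: "real \<Rightarrow> real \<Rightarrow> real \<Rightarrow> vsp" where
  "E4 ci cj ck = vector [0, 0, ck * ci, ck * cj, - (ci^2 + cj^2)]"

definition E1' :: "real \<Rightarrow> real \<Rightarrow> real \<Rightarrow> vsp" where
  "E1' ci cj ck = vector [1, 0, 0, 0, 0]"
definition E2' :: "real \<Rightarrow> real \<Rightarrow> real \<Rightarrow> vsp" where
  "E2' ci cj ck = vector [0, 1, 0, 0, 0]"
definition E3' :: "real \<Rightarrow> real \<Rightarrow> real \<Rightarrow> vsp" where
  "E3' ci cj ck = norm (Zc ci cj ck) *\<^sub>R vector [0, 0, cj, - ci, 0]"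
definition E4' :: "real \<Rightarrow> real \<Rightarrow> real \<Rightarrow> vsp" where
  "E4' ci cj ck = vector [0, 0, ck * ci, ck * cj, - (ci^2 + cj^2)]"

end

theory Submission
  imports Defs
begin


lemma vec5[simp]: "(vector [a,b,c,d,e]::('x::zero)^5)$1 = a" "(vector [a,b,c,d,e]::('x::zero)^5)$2 = b"
 "(vector [a,b,c,d,e]::('x::zero)^5)$3 = c" "(vector [a,b,c,d,e]::('x::zero)^5)$4 = d"
 "(vector [a,b,c,d,e]::('x::zero)^5)$5 = e"
  unfolding vector_def by simp_all
lemma exhaust_5:
  fixes x :: 5
  shows "x = 1 \<or> x = 2 \<or> x = 3 \<or> x = 4 \<or> x = 5"
proof (induct x)
  case (of_int z)
  then have "z = 0 \<or> z = 1 \<or> z = 2 \<or> z = 3 \<or> z = 4" by fastforce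
  then show ?case by auto
qed
lemma forall_5: "(\<forall>i::5. P i) \<longleftrightarrow> P 1 \<and> P 2 \<and> P 3 \<and> P 4 \<and> P 5"
  by (metis exhaust_5)
lemma UNIV_5: "UNIV = {1, 2, 3, 4, 5::5}"
  using exhaust_5 by auto
lemma sum_5: "sum f (UNIV::5 set) = f 1 + f 2 + f 3 + f 4 + f 5"
  unfolding UNIV_5 by (simp add: ac_simps)
lemma inner5: "inner (x::real^5) y = x$1*y$1 + x$2*y$2 + x$3*y$3 + x$4*y$4 + x$5*y$5"
  by (simp add: inner_vec_def sum_5)
lemma inner3: "inner (x::real^3) y = x$1*y$1 + x$2*y$2 + x$3*y$3"
  by (simp add: inner_vec_def sum_3)
lemma vec5_eq: "(x::real^5) = y \<longleftrightarrow> x$1 = y$1 \<and> x$2 = y$2 \<and> x$3 = y$3 \<and> x$4 = y$4 \<and> x$5 = y$5"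
  by (simp add: vec_eq_iff forall_5)
lemma vec3_eq: "(x::real^3) = y \<longleftrightarrow> x$1 = y$1 \<and> x$2 = y$2 \<and> x$3 = y$3"
  by (simp add: vec_eq_iff forall_3)

definition JN :: "zsp \<Rightarrow> vsp \<Rightarrow> vsp" where
  "JN Z a = vector [Z$2 * a$5 - Z$3 * a$4, - Z$1 * a$5 + Z$3 * a$3, - Z$3 * a$2, Z$3 * a$1, Z$1 * a$2 - Z$2 * a$1]"
definition JN' :: "zsp \<Rightarrow> vsp \<Rightarrow> vsp" where
  "JN' Z a = vector [- Z$3 * a$2, Z$3 * a$1, Z$2 * a$5 - Z$3 * a$4, - Z$1 * a$5 + Z$3 * a$3, Z$1 * a$4 - Z$2 * a$3]"

lemma JN_inner: "inner (JN Z X) Y = inner Z (brN X Y)"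
  by (simp add: JN_def brN_def inner5 inner3 algebra_simps)
lemma JN'_inner: "inner (JN' Z X) Y = inner Z (brN' X Y)"
  by (simp add: JN'_def brN'_def inner5 inner3 algebra_simps)

lemma brN_bil: "brN (x + y) w = brN x w + brN y w" "brN (c *\<^sub>R x) w = c *\<^sub>R brN x w"
   "brN x y = - brN y x"
  by (simp_all add: brN_def vec3_eq algebra_simps)
lemma brN'_bil: "brN' (x + y) w = brN' x w + brN' y w" "brN' (c *\<^sub>R x) w = c *\<^sub>R brN' x w"
   "brN' x y = - brN' y x"
  by (simp_all add: brN'_def vec3_eq algebra_simps)



definition fu :: "real\<Rightarrow>real\<Rightarrow>real\<Rightarrow>real\<Rightarrow>real\<Rightarrow>real\<Rightarrow>real" where
  "fu A B C T k t = A + B* cos(k*t) + C* sin(k*t) + T*t"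
definition fx :: "real\<Rightarrow>real\<Rightarrow>real\<Rightarrow>real\<Rightarrow>real\<Rightarrow>real" where
  "fx D E F k t = D + E* cos(k*t) + F* sin(k*t)"

definition AD :: "real \<Rightarrow> (real \<Rightarrow> real) \<Rightarrow> real \<Rightarrow> bool" where
  "AD \<tau> f w \<longleftrightarrow> (\<exists>G. (\<forall>t. (G has_real_derivative f t) (at t)) \<and> G \<tau> - G 0 = w)"

definition vS where "vS A B C T D E F k \<tau> = \<tau>*(A*D + (B*E + C*F)/2) + T*(D*\<tau>^2/2 - F*\<tau>/k)"
definition vC where "vC A T D F l \<tau> = \<tau>*A*D + T*(D*\<tau>^2/2 - F*\<tau>/l)"

lemma sc_deriv[derivative_intros]:
  "((\<lambda>t. sin (k*t)) has_real_derivative (k * cos (k*t))) (at t)"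
  "((\<lambda>t. cos (k*t)) has_real_derivative (- k * sin (k*t))) (at t)"
  by (auto intro!: derivative_eq_intros)

lemma AD_same:
  assumes k: "k \<noteq> 0" and p: "sin (k*\<tau>) = 0" "cos (k*\<tau>) = 1"
  shows "AD \<tau> (\<lambda>t. fu A B C T k t * fx D E F k t) (vS A B C T D E F k \<tau>)"
proof -
  define ik where "ik = 1/k"
  define G where "G t = A*D*t + (A*E + B*D)*ik* sin(k*t) - (A*F + C*D)*ik* cos(k*t)
     + B*E*(t*(1/2) + ik*(1/2)* sin(k*t)* cos(k*t)) + (B*F + C*E)*ik*(1/2)*(sin(k*t)* sin(k*t))
     + C*F*(t*(1/2) - ik*(1/2)* sin(k*t)* cos(k*t)) + T*D*(1/2)*(t*t) + T*E*(ik*t* sin(k*t) + ik*ik* cos(k*t))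
     + T*F*(- ik*t* cos(k*t) + ik*ik* sin(k*t))" for t
  have pyth: "(sin(k*t))^2 = 1 - (cos(k*t))^2" for t by (simp add: sin_squared_eq)
  have d: "(G has_real_derivative fu A B C T k t * fx D E F k t) (at t)" for t
    unfolding G_def[abs_def]
    apply (rule derivative_eq_intros refl)+
    unfolding fu_def fx_def ik_def
    apply (simp add: field_simps power2_eq_square)
    using k apply (simp add: algebra_simps pyth[unfolded power2_eq_square])
    done
  have v: "G \<tau> - G 0 = vS A B C T D E F k \<tau>"
    using k p by (simp add: G_def vS_def ik_def field_simps power2_eq_square)
  show ?thesis unfolding AD_def using d v by blast
qed


lemma AD_cross:
  assumes k: "k \<noteq> 0" "l \<noteq> 0" "k^2 \<noteq> l^2" and p: "sin (k*\<tau>) = 0" "cos (k*\<tau>) = 1"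
     "sin (l*\<tau>) = 0" "cos (l*\<tau>) = 1"
  shows "AD \<tau> (\<lambda>t. fu A B C T k t * fx D E F l t) (vC A T D F l \<tau>)"
proof -
  define ik where "ik = 1/k"
  define il where "il = 1/l"
  define iq where "iq = 1/(k^2-l^2)"
  define G where "G t = A*D*t + A*E*il* sin(l*t) - A*F*il* cos(l*t) + B*D*ik* sin(k*t) - C*D*ik* cos(k*t)
     + T*D*(1/2)*(t*t) + T*E*(il*t* sin(l*t) + il*il* cos(l*t)) + T*F*(- il*t* cos(l*t) + il*il* sin(l*t))
     + B*E*iq*(k* sin(k*t)* cos(l*t) - l* cos(k*t)* sin(l*t))
     + B*F*iq*(k* sin(k*t)* sin(l*t) + l* cos(k*t)* cos(l*t))
     - C*E*iq*(l* sin(k*t)* sin(l*t) + k* cos(k*t)* cos(l*t))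
     + C*F*iq*(l* sin(k*t)* cos(l*t) - k* cos(k*t)* sin(l*t))" for t
  have kq: "k^2 - l^2 \<noteq> 0" using k by simp
  have h: "ik*k = 1" "il*l = 1" "iq*(k^2-l^2) = 1" using k kq by (simp_all add: ik_def il_def iq_def)
  have d: "(G has_real_derivative fu A B C T k t * fx D E F l t) (at t)" for t
    unfolding G_def[abs_def]
    apply (rule derivative_eq_intros refl)+
    unfolding fu_def fx_def
    using h by algebra
  have v: "G \<tau> - G 0 = vC A T D F l \<tau>"
    unfolding G_def vC_def using p k(2)
    by (simp add: il_def field_simps power2_eq_square)
  show ?thesis unfolding AD_def using d v by blast
qed


lemma fx_deriv[derivative_intros]:
  "((\<lambda>t. fx D E F k t) has_real_derivative (F*k* cos(k*t) - E*k* sin(k*t))) (at t)"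
  unfolding fx_def by (rule derivative_eq_intros refl)+ (simp add: algebra_simps)
lemma fu_deriv[derivative_intros]:
  "((\<lambda>t. fu A B C T k t) has_real_derivative (T + C*k* cos(k*t) - B*k* sin(k*t))) (at t)"
  unfolding fu_def by (rule derivative_eq_intros refl)+ (simp add: algebra_simps)

lemma AD_fx:
  assumes k: "k \<noteq> 0" and p: "sin (k*\<tau>) = 0" "cos (k*\<tau>) = 1"
  shows "AD \<tau> (\<lambda>t. fx D E F k t) (\<tau>*D)"
proof -
  have "AD \<tau> (\<lambda>t. fu 1 0 0 0 k t * fx D E F k t) (vS 1 0 0 0 D E F k \<tau>)" by (rule AD_same[OF assms])
  then show ?thesis by (simp add: fu_def vS_def)
qed

definition ADV :: "real \<Rightarrow> (real \<Rightarrow> 'a::real_normed_vector) \<Rightarrow> 'a \<Rightarrow> bool" where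
  "ADV \<tau> f w \<longleftrightarrow> (\<exists>G. (\<forall>t. (G has_vector_derivative f t) (at t)) \<and> G \<tau> - G 0 = w)"

lemma ADV_add: "ADV \<tau> f a \<Longrightarrow> ADV \<tau> g b \<Longrightarrow> ADV \<tau> (\<lambda>t. f t + g t) (a + b)"
  unfolding ADV_def
proof (elim exE conjE)
  fix F G assume "\<forall>t. (F has_vector_derivative f t) (at t)" "F \<tau> - F 0 = a"
    "\<forall>t. (G has_vector_derivative g t) (at t)" "G \<tau> - G 0 = b"
  then show "\<exists>H. (\<forall>t. (H has_vector_derivative f t + g t) (at t)) \<and> H \<tau> - H 0 = a + b"
    by (intro exI[of _ "\<lambda>t. F t + G t"]) (auto intro!: derivative_eq_intros simp: algebra_simps)
qed

lemma ADV_scaleR: "ADV \<tau> f a \<Longrightarrow> ADV \<tau> (\<lambda>t. c *\<^sub>R f t) (c *\<^sub>R a)"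
  unfolding ADV_def
proof (elim exE conjE)
  fix F assume "\<forall>t. (F has_vector_derivative f t) (at t)" "F \<tau> - F 0 = a"
  then show "\<exists>H. (\<forall>t. (H has_vector_derivative c *\<^sub>R f t) (at t)) \<and> H \<tau> - H 0 = c *\<^sub>R a"
    by (intro exI[of _ "\<lambda>t. c *\<^sub>R F t"]) (auto intro!: derivative_eq_intros simp: algebra_simps)
qed

lemma ADV_const: "ADV \<tau> (\<lambda>t. w) (\<tau> *\<^sub>R w)"
  unfolding ADV_def
  by (intro exI[of _ "\<lambda>t. t *\<^sub>R w"]) (auto intro!: derivative_eq_intros)

lemma ADV_scale: "AD \<tau> f c \<Longrightarrow> ADV \<tau> (\<lambda>t. f t *\<^sub>R w) (c *\<^sub>R w)"
  unfolding ADV_def AD_def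
proof (elim exE conjE)
  fix F assume "\<forall>t. (F has_real_derivative f t) (at t)" "F \<tau> - F 0 = c"
  then show "\<exists>H. (\<forall>t. (H has_vector_derivative f t *\<^sub>R w) (at t)) \<and> H \<tau> - H 0 = c *\<^sub>R w"
    by (intro exI[of _ "\<lambda>t. F t *\<^sub>R w"]) (auto intro!: derivative_eq_intros simp: algebra_simps)
qed

lemma zero_deriv_const:
  fixes f :: "real \<Rightarrow> 'a::real_normed_vector"
  assumes "\<And>t. (f has_vector_derivative 0) (at t)"
  shows "f x = f y"
proof -
  obtain c where "\<And>x. x \<in> UNIV \<Longrightarrow> f x = c"
    by (rule has_vector_derivative_zero_constant[of UNIV f]) (use assms in auto)
  then show ?thesis by auto
qed

definition lc :: "vsp\<Rightarrow>vsp\<Rightarrow>vsp\<Rightarrow>vsp\<Rightarrow>vsp\<Rightarrow>real\<Rightarrow>real\<Rightarrow>real\<Rightarrow>real\<Rightarrow>real\<Rightarrow>vsp" where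
  "lc B0 B1 B2 B3 B4 c0 c1 c2 c3 c4 = c0 *\<^sub>R B0 + c1 *\<^sub>R B1 + c2 *\<^sub>R B2 + c3 *\<^sub>R B3 + c4 *\<^sub>R B4"

lemma lc_deriv:
  assumes "(c0 has_real_derivative d0) (at t)" "(c1 has_real_derivative d1) (at t)"
    "(c2 has_real_derivative d2) (at t)" "(c3 has_real_derivative d3) (at t)" "(c4 has_real_derivative d4) (at t)"
  shows "((\<lambda>t. lc B0 B1 B2 B3 B4 (c0 t) (c1 t) (c2 t) (c3 t) (c4 t)) has_vector_derivative
     lc B0 B1 B2 B3 B4 d0 d1 d2 d3 d4) (at t)"
  unfolding lc_def by (rule derivative_eq_intros refl assms)+ simp

lemma orth0: "(\<And>Y. inner (d::'a::real_inner) Y = 0) \<Longrightarrow> d = 0"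
  by (metis inner_eq_zero_iff)

locale brsetup =
  fixes br :: "vsp \<Rightarrow> vsp \<Rightarrow> zsp" and JJ :: "zsp \<Rightarrow> vsp \<Rightarrow> vsp"
  assumes jj: "inner (JJ Z X) Y = inner Z (br X Y)"
    and br_add: "br (x + y) w = br x w + br y w"
    and br_scale: "br (c *\<^sub>R x) w = c *\<^sub>R br x w"
    and br_anti: "br x y = - br y x"
begin

lemma br_add2: "br w (x + y) = br w x + br w y"
  by (metis br_add br_anti minus_add_distrib)
lemma br_scale2: "br w (c *\<^sub>R x) = c *\<^sub>R br w x"
  by (metis br_anti br_scale scaleR_minus_right)
lemma br_self: "br x x = 0"
proof -
  have "br x x = - br x x" by (rule br_anti)
  then have "2 *\<^sub>R br x x = 0" by (simp add: scaleR_2 eq_neg_iff_add_eq_0)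
  then show ?thesis by simp
qed
lemma br_minus1: "br (- x) w = - br x w"
  using br_scale[of "-1" x w] by simp
lemma br_minus2: "br w (- x) = - br w x"
  using br_scale2[of w "-1" x] by simp

lemma JJ_add: "JJ Z (x + y) = JJ Z x + JJ Z y"
proof -
  have "inner (JJ Z (x+y) - JJ Z x - JJ Z y) Y = 0" for Y
    by (simp add: inner_diff_left jj br_add inner_add_right)
  then have "JJ Z (x+y) - JJ Z x - JJ Z y = 0" by (rule orth0)
  then show ?thesis by (simp add: algebra_simps)
qed
lemma JJ_scale: "JJ Z (c *\<^sub>R x) = c *\<^sub>R JJ Z x"
proof -
  have "inner (JJ Z (c *\<^sub>R x) - c *\<^sub>R JJ Z x) Y = 0" for Y
    by (simp add: inner_diff_left jj br_scale)
  then have "JJ Z (c *\<^sub>R x) - c *\<^sub>R JJ Z x = 0" by (rule orth0)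
  then show ?thesis by simp
qed
lemma JJ_diff: "JJ Z (x - y) = JJ Z x - JJ Z y"
  using JJ_add[of Z x "- y"] JJ_scale[of Z "-1" y] by simp
lemma JJ_zero: "JJ Z 0 = 0"
  using JJ_scale[of Z 0 0] by simp
lemma JJ_skew: "inner (JJ Z x) y = - inner x (JJ Z y)"
  by (metis jj br_anti inner_minus_right inner_commute)
lemma JJ_self: "inner (JJ Z x) x = 0"
  using JJ_skew[of Z x x] by (simp add: inner_commute)

lemma jmap_eq: "jmap br Z X = JJ Z X"
  unfolding jmap_def
proof (rule the_equality)
  show "\<forall>Y. inner (JJ Z X) Y = inner Z (br X Y)" by (simp add: jj)
  fix W assume a: "\<forall>Y. inner W Y = inner Z (br X Y)"
  have "inner (W - JJ Z X) Y = 0" for Y using a by (simp add: inner_diff_left jj)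
  then have "W - JJ Z X = 0" by (rule orth0)
  then show "W = JJ Z X" by simp
qed

lemma adstar_eq: "adstar br X Y = (JJ (snd Y) (fst X), 0)"
  unfolding adstar_def
proof (rule the_equality)
  show "\<forall>U. inner (JJ (snd Y) (fst X), 0::zsp) U = inner Y (lbr br X U)"
  proof
    fix U show "inner (JJ (snd Y) (fst X), 0::zsp) U = inner Y (lbr br X U)"
      by (cases U, cases Y) (simp add: lbr_def jj)
  qed
  fix W assume a: "\<forall>U. inner W U = inner Y (lbr br X U)"
  have "inner (W - (JJ (snd Y) (fst X), 0)) U = 0" for U
    using a[rule_format, of U] by (cases U, cases Y, cases W) (simp add: lbr_def jj inner_diff_left)
  then have "W - (JJ (snd Y) (fst X), 0) = 0" by (rule orth0)
  then show "W = (JJ (snd Y) (fst X), 0)" by simp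
qed

lemma lcconn_eq: "- lcconn br A A = (JJ (snd A) (fst A), 0)"
  by (simp add: lcconn_def lbr_def adstar_eq br_self)

lemma eig_orth:
  assumes "U \<in> eigsp br Z l" "W \<in> eigsp br Z m" "l^2 \<noteq> m^2"
  shows "inner U W = 0"
proof -
  have e: "JJ Z (JJ Z U) = - (l^2) *\<^sub>R U" "JJ Z (JJ Z W) = - (m^2) *\<^sub>R W"
    using assms by (simp_all add: eigsp_def jmap_eq)
  have "inner (JJ Z (JJ Z U)) W = inner U (JJ Z (JJ Z W))"
    by (simp add: JJ_skew)
  then have "(l^2 - m^2) * inner U W = 0" by (simp add: e algebra_simps)
  with assms(3) show ?thesis by simp
qed

lemma Vcomp_eq:
  assumes "W \<in> eigsp br Z l" "\<forall>U\<in>eigsp br Z l. inner (V - W) U = 0"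
  shows "Vcomp br Z l V = W"
  unfolding Vcomp_def
proof (rule the_equality)
  show "W \<in> eigsp br Z l \<and> (\<forall>U\<in>eigsp br Z l. inner (V - W) U = 0)" using assms by blast
  fix W' assume a: "W' \<in> eigsp br Z l \<and> (\<forall>U\<in>eigsp br Z l. inner (V - W') U = 0)"
  have m: "W' - W \<in> eigsp br Z l"
    using a assms(1) by (simp add: eigsp_def jmap_eq JJ_diff algebra_simps)
  have "inner (V - W') (W' - W) = 0" "inner (V - W) (W' - W) = 0"
    using a assms(2) m by auto
  then have "inner (W' - W) (W' - W) = 0" by (simp only: inner_diff_left)
  then show "W' = W" by (simp only: inner_eq_zero_iff) simp
qed

end


locale frame = brsetup +
  fixes Z :: zsp and k1 k2 :: real and B0 B1 B2 B3 B4 :: vsp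
  assumes J0: "JJ Z B0 = 0" and J1: "JJ Z B1 = k1 *\<^sub>R B2" and J2: "JJ Z B2 = - k1 *\<^sub>R B1"
    and J3: "JJ Z B3 = k2 *\<^sub>R B4" and J4: "JJ Z B4 = - k2 *\<^sub>R B3"
    and o01: "inner B0 B1 = 0" and o02: "inner B0 B2 = 0" and o03: "inner B0 B3 = 0" and o04: "inner B0 B4 = 0"
    and o12: "inner B1 B2 = 0" and o13: "inner B1 B3 = 0" and o14: "inner B1 B4 = 0"
    and o23: "inner B2 B3 = 0" and o24: "inner B2 B4 = 0" and o34: "inner B3 B4 = 0"
    and nz0: "B0 \<noteq> 0" and nz1: "B1 \<noteq> 0" and nz2: "B2 \<noteq> 0" and nz3: "B3 \<noteq> 0" and nz4: "B4 \<noteq> 0"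
    and k1: "k1 \<noteq> 0" and k2: "k2 \<noteq> 0" and k12: "k1^2 \<noteq> k2^2"
begin

abbreviation L where "L \<equiv> lc B0 B1 B2 B3 B4"

lemmas orths = o01 o02 o03 o04 o12 o13 o14 o23 o24 o34
  o01[unfolded inner_commute[of B0]] o02[unfolded inner_commute[of B0]] o03[unfolded inner_commute[of B0]]
  o04[unfolded inner_commute[of B0]] o12[unfolded inner_commute[of B1]] o13[unfolded inner_commute[of B1]]
  o14[unfolded inner_commute[of B1]] o23[unfolded inner_commute[of B2]] o24[unfolded inner_commute[of B2]]
  o34[unfolded inner_commute[of B3]]

lemma JJ_L: "JJ Z (L c0 c1 c2 c3 c4) = L 0 (-k1*c2) (k1*c1) (-k2*c4) (k2*c3)"
  by (simp add: lc_def JJ_add JJ_scale J0 J1 J2 J3 J4 algebra_simps)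

lemma L_inner: "inner (L c0 c1 c2 c3 c4) B0 = c0 * inner B0 B0"
  "inner (L c0 c1 c2 c3 c4) B1 = c1 * inner B1 B1"
  "inner (L c0 c1 c2 c3 c4) B2 = c2 * inner B2 B2"
  "inner (L c0 c1 c2 c3 c4) B3 = c3 * inner B3 B3"
  "inner (L c0 c1 c2 c3 c4) B4 = c4 * inner B4 B4"
  by (simp_all add: lc_def inner_add_left orths)

lemma L_eq:
  assumes "L c0 c1 c2 c3 c4 = L d0 d1 d2 d3 d4"
  shows "c0 = d0 \<and> c1 = d1 \<and> c2 = d2 \<and> c3 = d3 \<and> c4 = d4"
proof -
  have "c0 * inner B0 B0 = d0 * inner B0 B0" "c1 * inner B1 B1 = d1 * inner B1 B1"
    "c2 * inner B2 B2 = d2 * inner B2 B2" "c3 * inner B3 B3 = d3 * inner B3 B3"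
    "c4 * inner B4 B4 = d4 * inner B4 B4"
    using L_inner[of c0 c1 c2 c3 c4] L_inner[of d0 d1 d2 d3 d4] assms by metis+
  then show ?thesis using nz0 nz1 nz2 nz3 nz4 by simp
qed

lemma L_cong: "c0 = d0 \<Longrightarrow> c1 = d1 \<Longrightarrow> c2 = d2 \<Longrightarrow> c3 = d3 \<Longrightarrow> c4 = d4 \<Longrightarrow>
  L c0 c1 c2 c3 c4 = L d0 d1 d2 d3 d4" by simp

lemma eig0: "c *\<^sub>R B0 \<in> eigsp br Z 0"
  by (simp add: eigsp_def jmap_eq JJ_scale J0 JJ_zero)
lemma eig1: "c1 *\<^sub>R B1 + c2 *\<^sub>R B2 \<in> eigsp br Z k1"
  by (simp add: eigsp_def jmap_eq JJ_scale JJ_add JJ_diff J1 J2 algebra_simps power2_eq_square)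
lemma eig2: "c3 *\<^sub>R B3 + c4 *\<^sub>R B4 \<in> eigsp br Z k2"
  by (simp add: eigsp_def jmap_eq JJ_scale JJ_add JJ_diff J3 J4 algebra_simps power2_eq_square)

lemma Vcomps:
  assumes V: "V = L a0 a1 a2 a3 a4"
  shows "Vcomp br Z k1 V = a1 *\<^sub>R B1 + a2 *\<^sub>R B2" "Vcomp br Z k2 V = a3 *\<^sub>R B3 + a4 *\<^sub>R B4"
    "Vcomp br Z 0 V = a0 *\<^sub>R B0"
proof -
  have b0: "B0 \<in> eigsp br Z 0" using eig0[of 1] by simp
  have b1: "B1 \<in> eigsp br Z k1" "B2 \<in> eigsp br Z k1" using eig1[of 1 0] eig1[of 0 1] by simp_all
  have b3: "B3 \<in> eigsp br Z k2" "B4 \<in> eigsp br Z k2" using eig2[of 1 0] eig2[of 0 1] by simp_all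
  have n: "(0::real)^2 \<noteq> k1^2" "(0::real)^2 \<noteq> k2^2" "k1^2 \<noteq> k2^2" "k2^2 \<noteq> k1^2"
    using k1 k2 k12 by auto
  show "Vcomp br Z k1 V = a1 *\<^sub>R B1 + a2 *\<^sub>R B2"
  proof (rule Vcomp_eq[OF eig1], intro ballI)
    fix U assume U: "U \<in> eigsp br Z k1"
    have "inner B0 U = 0" "inner B3 U = 0" "inner B4 U = 0"
      using eig_orth[OF b0 U n(1)] eig_orth[OF b3(1) U n(4)] eig_orth[OF b3(2) U n(4)] by auto
    then show "inner (V - (a1 *\<^sub>R B1 + a2 *\<^sub>R B2)) U = 0"
      by (simp add: V lc_def inner_add_left inner_diff_left)
  qed
  show "Vcomp br Z k2 V = a3 *\<^sub>R B3 + a4 *\<^sub>R B4"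
  proof (rule Vcomp_eq[OF eig2], intro ballI)
    fix U assume U: "U \<in> eigsp br Z k2"
    have "inner B0 U = 0" "inner B1 U = 0" "inner B2 U = 0"
      using eig_orth[OF b0 U n(2)] eig_orth[OF b1(1) U n(3)] eig_orth[OF b1(2) U n(3)] by auto
    then show "inner (V - (a3 *\<^sub>R B3 + a4 *\<^sub>R B4)) U = 0"
      by (simp add: V lc_def inner_add_left inner_diff_left)
  qed
  show "Vcomp br Z 0 V = a0 *\<^sub>R B0"
  proof (rule Vcomp_eq[OF eig0], intro ballI)
    fix U assume U: "U \<in> eigsp br Z 0"
    have "inner B1 U = 0" "inner B2 U = 0" "inner B3 U = 0" "inner B4 U = 0"
      using eig_orth[OF b1(1) U] eig_orth[OF b1(2) U] eig_orth[OF b3(1) U] eig_orth[OF b3(2) U] n by auto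
    then show "inner (V - a0 *\<^sub>R B0) U = 0"
      by (simp add: V lc_def inner_add_left inner_diff_left)
  qed
qed

end


lemma rot_fix:
  fixes a b c s :: real
  assumes "a*c - b * s = a" "b*c + a * s = b" "a \<noteq> 0 \<or> b \<noteq> 0" "s^2 + c^2 = 1"
  shows "c = 1 \<and> s = 0"
proof -
  have "(a^2 + b^2) * (c - 1) = a*(a*c - b * s - a) + b*(b*c + a * s - b)" by (simp add: algebra_simps power2_eq_square)
  also have "\<dots> = 0" using assms by simp
  finally have "(a^2 + b^2) * (c - 1) = 0" .
  moreover have "a^2 + b^2 \<noteq> 0" using assms(3) by (simp add: sum_power2_eq_zero_iff)
  ultimately have c: "c = 1" by (metis mult_eq_0_iff right_minus_eq)
  then have "b * s = 0" "a * s = 0" using assms(1,2) by simp_all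
  then have "s = 0" using assms(3) by auto
  with c show ?thesis by simp
qed


context frame begin

lemma br_expand:
  "br (v + L u0 u1 u2 u3 u4) (L x0 x1 x2 x3 x4) = (x0 *\<^sub>R br v B0 + x1 *\<^sub>R br v B1 + x2 *\<^sub>R br v B2 + x3 *\<^sub>R br v B3 + x4 *\<^sub>R br v B4) + ((u0 * x0) *\<^sub>R br B0 B0 + (u0 * x1) *\<^sub>R br B0 B1 + (u0 * x2) *\<^sub>R br B0 B2 + (u0 * x3) *\<^sub>R br B0 B3 + (u0 * x4) *\<^sub>R br B0 B4 + (u1 * x0) *\<^sub>R br B1 B0 + (u1 * x1) *\<^sub>R br B1 B1 + (u1 * x2) *\<^sub>R br B1 B2 + (u1 * x3) *\<^sub>R br B1 B3 + (u1 * x4) *\<^sub>R br B1 B4 + (u2 * x0) *\<^sub>R br B2 B0 + (u2 * x1) *\<^sub>R br B2 B1 + (u2 * x2) *\<^sub>R br B2 B2 + (u2 * x3) *\<^sub>R br B2 B3 + (u2 * x4) *\<^sub>R br B2 B4 + (u3 * x0) *\<^sub>R br B3 B0 + (u3 * x1) *\<^sub>R br B3 B1 + (u3 * x2) *\<^sub>R br B3 B2 + (u3 * x3) *\<^sub>R br B3 B3 + (u3 * x4) *\<^sub>R br B3 B4 + (u4 * x0) *\<^sub>R br B4 B0 + (u4 * x1) *\<^sub>R br B4 B1 + (u4 * x2) *\<^sub>R br B4 B2 + (u4 * x3) *\<^sub>R br B4 B3 + (u4 * x4) *\<^sub>R br B4 B4)"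
  by (simp add: lc_def br_add br_add2 br_scale br_scale2 algebra_simps)

lemma geo_main:
  fixes \<gamma> :: "real \<Rightarrow> vsp \<times> zsp" and v V :: vsp and z :: zsp
  assumes geo: "geodesic br \<gamma>" and init: "\<gamma> 0 = (v, z)" "vel br \<gamma> 0 = (V, Z)"
    and tau: "vel br \<gamma> \<tau> = (V, Z)"
    and V: "V = L a0 a1 a2 a3 a4"
    and nz12: "a1 *\<^sub>R B1 + a2 *\<^sub>R B2 \<noteq> 0" and nz34: "a3 *\<^sub>R B3 + a4 *\<^sub>R B4 \<noteq> 0"
  shows "cos (k1*\<tau>) = 1 \<and> sin (k1*\<tau>) = 0 \<and> cos (k2*\<tau>) = 1 \<and> sin (k2*\<tau>) = 0 \<and>
    gmult br (\<gamma> \<tau>) (ginv (\<gamma> 0)) = ((\<tau>*a0) *\<^sub>R B0,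
      \<tau> *\<^sub>R Z + (\<tau>*a0) *\<^sub>R br v B0 + (\<tau>*a0*a2/k1) *\<^sub>R br B0 B1 - (\<tau>*a0*a1/k1) *\<^sub>R br B0 B2
      + (\<tau>*a0*a4/k2) *\<^sub>R br B0 B3 - (\<tau>*a0*a3/k2) *\<^sub>R br B0 B4
      + (\<tau>*(a1^2+a2^2)/(2*k1)) *\<^sub>R br B1 B2 + (\<tau>*(a3^2+a4^2)/(2*k2)) *\<^sub>R br B3 B4)"
proof -
  define A where "A = vel br \<gamma>"
  have dA: "(A has_vector_derivative (JJ (snd (A t)) (fst (A t)), 0)) (at t)" for t
    using geo unfolding geodesic_def A_def lcconn_eq by simp
  have dsnd: "((\<lambda>t. snd (A t)) has_vector_derivative 0) (at t)" for t
    using bounded_linear.has_vector_derivative[OF bounded_linear_snd dA[of t]] by simp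
  have sndA: "snd (A t) = Z" for t
    using zero_deriv_const[of "\<lambda>t. snd (A t)", OF dsnd, of t 0] init(2) A_def by simp
  define X where "X t = fst (A t)" for t
  have dX: "(X has_vector_derivative JJ Z (X t)) (at t)" for t
    using bounded_linear.has_vector_derivative[OF bounded_linear_fst dA[of t]] sndA
    unfolding X_def[abs_def] by simp
  define Xs where "Xs t = L (fx a0 0 0 k1 t) (fx 0 a1 (-a2) k1 t) (fx 0 a2 a1 k1 t) (fx 0 a3 (-a4) k2 t) (fx 0 a4 a3 k2 t)" for t
  have dXs: "(Xs has_vector_derivative JJ Z (Xs t)) (at t)" for t
  proof -
    have "(Xs has_vector_derivative L (0*k1* cos(k1*t) - 0*k1* sin(k1*t))
       ((-a2)*k1* cos(k1*t) - a1*k1* sin(k1*t)) (a1*k1* cos(k1*t) - a2*k1* sin(k1*t))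
       ((-a4)*k2* cos(k2*t) - a3*k2* sin(k2*t)) (a3*k2* cos(k2*t) - a4*k2* sin(k2*t))) (at t)"
      unfolding Xs_def[abs_def] by (intro lc_deriv fx_deriv)
    moreover have "L (0*k1* cos(k1*t) - 0*k1* sin(k1*t))
       ((-a2)*k1* cos(k1*t) - a1*k1* sin(k1*t)) (a1*k1* cos(k1*t) - a2*k1* sin(k1*t))
       ((-a4)*k2* cos(k2*t) - a3*k2* sin(k2*t)) (a3*k2* cos(k2*t) - a4*k2* sin(k2*t)) = JJ Z (Xs t)"
      unfolding Xs_def JJ_L by (rule L_cong) (simp_all add: fx_def algebra_simps)
    ultimately show ?thesis by simp
  qed
  have XV: "X 0 = V" using init(2) by (simp add: X_def A_def)
  have Xs0: "Xs 0 = V" by (simp add: Xs_def V fx_def)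
  have XXs: "X t = Xs t" for t
  proof -
    define D where "D t = X t - Xs t" for t
    have dD: "(D has_vector_derivative JJ Z (D t)) (at t)" for t
      unfolding D_def[abs_def] JJ_diff by (rule has_vector_derivative_diff[OF dX dXs])
    have self2: "inner x (JJ Z x) = 0" for x using JJ_self[of Z x] by (simp add: inner_commute)
    have dN: "((\<lambda>t. inner (D t) (D t)) has_vector_derivative 0) (at t)" for t
      using bounded_bilinear.has_vector_derivative[OF bounded_bilinear_inner dD dD] by (simp add: JJ_self self2)
    have "inner (D t) (D t) = inner (D 0) (D 0)" by (rule zero_deriv_const[OF dN])
    moreover have "D 0 = 0" by (simp add: D_def XV Xs0)
    ultimately show ?thesis by (simp add: D_def)
  qed
  have XsT: "Xs \<tau> = L a0 a1 a2 a3 a4"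
    using XXs[of \<tau>] tau by (simp add: X_def A_def V)
  then have co: "fx 0 a1 (-a2) k1 \<tau> = a1" "fx 0 a2 a1 k1 \<tau> = a2" "fx 0 a3 (-a4) k2 \<tau> = a3" "fx 0 a4 a3 k2 \<tau> = a4"
    unfolding Xs_def using L_eq by blast+
  have a12: "a1 \<noteq> 0 \<or> a2 \<noteq> 0" using nz12 by auto
  have a34: "a3 \<noteq> 0 \<or> a4 \<noteq> 0" using nz34 by auto
  have p1: "cos (k1*\<tau>) = 1 \<and> sin (k1*\<tau>) = 0"
    by (rule rot_fix[OF _ _ a12]) (use co in \<open>simp_all add: fx_def algebra_simps\<close>)
  have p2: "cos (k2*\<tau>) = 1 \<and> sin (k2*\<tau>) = 0"
    by (rule rot_fix[OF _ _ a34]) (use co in \<open>simp_all add: fx_def algebra_simps\<close>)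
  have pp: "sin (k1*\<tau>) = 0" "cos (k1*\<tau>) = 1" "sin (k2*\<tau>) = 0" "cos (k2*\<tau>) = 1"
    using p1 p2 by auto
  define gd where "gd t = vector_derivative \<gamma> (at t)" for t
  have dg: "(\<gamma> has_vector_derivative gd t) (at t)" for t
    using geo by (simp add: geodesic_def gd_def vector_derivative_works[symmetric])
  have gdt: "fst (gd t) = Xs t \<and> snd (gd t) = Z + (1/2) *\<^sub>R br (fst (\<gamma> t)) (Xs t)" for t
  proof -
    have "A t = (fst (A t), snd (A t))" by simp
    then have "A t = (Xs t, Z)" using XXs sndA X_def by simp
    then show ?thesis unfolding A_def vel_def triv_def gd_def by (auto simp: algebra_simps)
  qed
  define Us where "Us t = L (fu 0 0 0 a0 k1 t) (fu (-a2/k1) (a2/k1) (a1/k1) 0 k1 t) (fu (a1/k1) (-a1/k1) (a2/k1) 0 k1 t) (fu (-a4/k2) (a4/k2) (a3/k2) 0 k2 t) (fu (a3/k2) (-a3/k2) (a4/k2) 0 k2 t)" for t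
  have dUs: "(Us has_vector_derivative Xs t) (at t)" for t
  proof -
    have "(Us has_vector_derivative L (a0 + 0*k1* cos(k1*t) - 0*k1* sin(k1*t))
       (0 + (a1/k1)*k1* cos(k1*t) - (a2/k1)*k1* sin(k1*t)) (0 + (a2/k1)*k1* cos(k1*t) - (-a1/k1)*k1* sin(k1*t))
       (0 + (a3/k2)*k2* cos(k2*t) - (a4/k2)*k2* sin(k2*t)) (0 + (a4/k2)*k2* cos(k2*t) - (-a3/k2)*k2* sin(k2*t))) (at t)"
      unfolding Us_def[abs_def] by (intro lc_deriv fu_deriv)
    moreover have "L (a0 + 0*k1* cos(k1*t) - 0*k1* sin(k1*t))
       (0 + (a1/k1)*k1* cos(k1*t) - (a2/k1)*k1* sin(k1*t)) (0 + (a2/k1)*k1* cos(k1*t) - (-a1/k1)*k1* sin(k1*t))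
       (0 + (a3/k2)*k2* cos(k2*t) - (a4/k2)*k2* sin(k2*t)) (0 + (a4/k2)*k2* cos(k2*t) - (-a3/k2)*k2* sin(k2*t)) = Xs t"
      unfolding Xs_def using k1 k2 by (rule_tac L_cong) (simp_all add: fx_def algebra_simps)
    ultimately show ?thesis by simp
  qed
  have fstg: "fst (\<gamma> t) = v + Us t" for t
  proof -
    have d0: "((\<lambda>t. fst (\<gamma> t) - Us t) has_vector_derivative 0) (at t)" for t
      using has_vector_derivative_diff[OF bounded_linear.has_vector_derivative[OF bounded_linear_fst dg[of t]] dUs[of t]]
        gdt by simp
    have "fst (\<gamma> t) - Us t = fst (\<gamma> 0) - Us 0" by (rule zero_deriv_const[OF d0])
    moreover have "Us 0 = 0" by (simp add: Us_def fu_def lc_def)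
    ultimately show ?thesis using init(1) by (simp add: algebra_simps)
  qed
  have dsg: "((\<lambda>t. snd (\<gamma> t)) has_vector_derivative (Z + (1/2) *\<^sub>R ((fx a0 0 0 k1 t *\<^sub>R br v B0 + fx 0 a1 (-a2) k1 t *\<^sub>R br v B1 + fx 0 a2 a1 k1 t *\<^sub>R br v B2 + fx 0 a3 (-a4) k2 t *\<^sub>R br v B3 + fx 0 a4 a3 k2 t *\<^sub>R br v B4) + ((fu 0 0 0 a0 k1 t * fx a0 0 0 k1 t) *\<^sub>R br B0 B0 + (fu 0 0 0 a0 k1 t * fx 0 a1 (-a2) k1 t) *\<^sub>R br B0 B1 + (fu 0 0 0 a0 k1 t * fx 0 a2 a1 k1 t) *\<^sub>R br B0 B2 + (fu 0 0 0 a0 k1 t * fx 0 a3 (-a4) k2 t) *\<^sub>R br B0 B3 + (fu 0 0 0 a0 k1 t * fx 0 a4 a3 k2 t) *\<^sub>R br B0 B4 + (fu (-a2/k1) (a2/k1) (a1/k1) 0 k1 t * fx a0 0 0 k1 t) *\<^sub>R br B1 B0 + (fu (-a2/k1) (a2/k1) (a1/k1) 0 k1 t * fx 0 a1 (-a2) k1 t) *\<^sub>R br B1 B1 + (fu (-a2/k1) (a2/k1) (a1/k1) 0 k1 t * fx 0 a2 a1 k1 t) *\<^sub>R br B1 B2 + (fu (-a2/k1) (a2/k1) (a1/k1) 0 k1 t * fx 0 a3 (-a4) k2 t) *\<^sub>R br B1 B3 + (fu (-a2/k1) (a2/k1) (a1/k1) 0 k1 t * fx 0 a4 a3 k2 t)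 *\<^sub>R br B1 B4 + (fu (a1/k1) (-a1/k1) (a2/k1) 0 k1 t * fx a0 0 0 k1 t) *\<^sub>R br B2 B0 + (fu (a1/k1) (-a1/k1) (a2/k1) 0 k1 t * fx 0 a1 (-a2) k1 t) *\<^sub>R br B2 B1 + (fu (a1/k1) (-a1/k1) (a2/k1) 0 k1 t * fx 0 a2 a1 k1 t) *\<^sub>R br B2 B2 + (fu (a1/k1) (-a1/k1) (a2/k1) 0 k1 t * fx 0 a3 (-a4) k2 t) *\<^sub>R br B2 B3 + (fu (a1/k1) (-a1/k1) (a2/k1) 0 k1 t * fx 0 a4 a3 k2 t) *\<^sub>R br B2 B4 + (fu (-a4/k2) (a4/k2) (a3/k2) 0 k2 t * fx a0 0 0 k1 t) *\<^sub>R br B3 B0 + (fu (-a4/k2) (a4/k2) (a3/k2) 0 k2 t * fx 0 a1 (-a2) k1 t) *\<^sub>R br B3 B1 + (fu (-a4/k2) (a4/k2) (a3/k2) 0 k2 t * fx 0 a2 a1 k1 t) *\<^sub>R br B3 B2 + (fu (-a4/k2) (a4/k2) (a3/k2) 0 k2 t * fx 0 a3 (-a4) k2 t) *\<^sub>R br B3 B3 + (fu (-a4/k2) (a4/k2) (a3/k2) 0 k2 t * fx 0 a4 a3 k2 t) *\<^sub>R br B3 B4 + (fu (a3/k2) (-a3/k2) (a4/k2) 0 k2 t * fx a0 0 0 k1 t) *\<^sub>R br B4 B0 + (fu (a3/k2) (-a3/k2) (a4/k2) 0 k2 t * fx 0 a1 (-a2) k1 t) *\<^sub>R br B4 B1 +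 (fu (a3/k2) (-a3/k2) (a4/k2) 0 k2 t * fx 0 a2 a1 k1 t) *\<^sub>R br B4 B2 + (fu (a3/k2) (-a3/k2) (a4/k2) 0 k2 t * fx 0 a3 (-a4) k2 t) *\<^sub>R br B4 B3 + (fu (a3/k2) (-a3/k2) (a4/k2) 0 k2 t * fx 0 a4 a3 k2 t) *\<^sub>R br B4 B4)))) (at t)" for t
  proof -
    have "((\<lambda>t. snd (\<gamma> t)) has_vector_derivative snd (gd t)) (at t)"
      using bounded_linear.has_vector_derivative[OF bounded_linear_snd dg[of t]] by simp
    moreover have "snd (gd t) = Z + (1/2) *\<^sub>R ((fx a0 0 0 k1 t *\<^sub>R br v B0 + fx 0 a1 (-a2) k1 t *\<^sub>R br v B1 + fx 0 a2 a1 k1 t *\<^sub>R br v B2 + fx 0 a3 (-a4) k2 t *\<^sub>R br v B3 + fx 0 a4 a3 k2 t *\<^sub>R br v B4) + ((fu 0 0 0 a0 k1 t * fx a0 0 0 k1 t) *\<^sub>R br B0 B0 + (fu 0 0 0 a0 k1 t * fx 0 a1 (-a2) k1 t) *\<^sub>R br B0 B1 + (fu 0 0 0 a0 k1 t * fx 0 a2 a1 k1 t) *\<^sub>R br B0 B2 + (fu 0 0 0 a0 k1 t * fx 0 a3 (-a4) k2 t) *\<^sub>R br B0 B3 + (fu 0 0 0 a0 k1 t * fx 0 a4 a3 k2 t) *\<^sub>R br B0 B4 + (fu (-a2/k1) (a2/k1) (a1/k1) 0 k1 t * fx a0 0 0 k1 t) *\<^sub>R br B1 B0 + (fu (-a2/k1)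 (a2/k1) (a1/k1) 0 k1 t * fx 0 a1 (-a2) k1 t) *\<^sub>R br B1 B1 + (fu (-a2/k1) (a2/k1) (a1/k1) 0 k1 t * fx 0 a2 a1 k1 t) *\<^sub>R br B1 B2 + (fu (-a2/k1) (a2/k1) (a1/k1) 0 k1 t * fx 0 a3 (-a4) k2 t) *\<^sub>R br B1 B3 + (fu (-a2/k1) (a2/k1) (a1/k1) 0 k1 t * fx 0 a4 a3 k2 t) *\<^sub>R br B1 B4 + (fu (a1/k1) (-a1/k1) (a2/k1) 0 k1 t * fx a0 0 0 k1 t) *\<^sub>R br B2 B0 + (fu (a1/k1) (-a1/k1) (a2/k1) 0 k1 t * fx 0 a1 (-a2) k1 t) *\<^sub>R br B2 B1 + (fu (a1/k1) (-a1/k1) (a2/k1) 0 k1 t * fx 0 a2 a1 k1 t) *\<^sub>R br B2 B2 + (fu (a1/k1) (-a1/k1) (a2/k1) 0 k1 t * fx 0 a3 (-a4) k2 t) *\<^sub>R br B2 B3 + (fu (a1/k1) (-a1/k1) (a2/k1) 0 k1 t * fx 0 a4 a3 k2 t) *\<^sub>R br B2 B4 + (fu (-a4/k2) (a4/k2) (a3/k2) 0 k2 t * fx a0 0 0 k1 t) *\<^sub>R br B3 B0 + (fu (-a4/k2) (a4/k2) (a3/k2) 0 k2 t * fx 0 a1 (-a2) k1 t) *\<^sub>R br B3 B1 + (fu (-a4/k2) (a4/k2) (a3/k2) 0 k2 t * fx 0 a2 a1 k1 t) *\<^sub>R br B3 B2 + (fu (-a4/k2) (a4/k2) (a3/k2)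 0 k2 t * fx 0 a3 (-a4) k2 t) *\<^sub>R br B3 B3 + (fu (-a4/k2) (a4/k2) (a3/k2) 0 k2 t * fx 0 a4 a3 k2 t) *\<^sub>R br B3 B4 + (fu (a3/k2) (-a3/k2) (a4/k2) 0 k2 t * fx a0 0 0 k1 t) *\<^sub>R br B4 B0 + (fu (a3/k2) (-a3/k2) (a4/k2) 0 k2 t * fx 0 a1 (-a2) k1 t) *\<^sub>R br B4 B1 + (fu (a3/k2) (-a3/k2) (a4/k2) 0 k2 t * fx 0 a2 a1 k1 t) *\<^sub>R br B4 B2 + (fu (a3/k2) (-a3/k2) (a4/k2) 0 k2 t * fx 0 a3 (-a4) k2 t) *\<^sub>R br B4 B3 + (fu (a3/k2) (-a3/k2) (a4/k2) 0 k2 t * fx 0 a4 a3 k2 t) *\<^sub>R br B4 B4))"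
      using gdt[of t] unfolding fstg Us_def Xs_def br_expand by simp
    ultimately show ?thesis by simp
  qed
  have adv: "ADV \<tau> (\<lambda>t. Z + (1/2) *\<^sub>R ((fx a0 0 0 k1 t *\<^sub>R br v B0 + fx 0 a1 (-a2) k1 t *\<^sub>R br v B1 + fx 0 a2 a1 k1 t *\<^sub>R br v B2 + fx 0 a3 (-a4) k2 t *\<^sub>R br v B3 + fx 0 a4 a3 k2 t *\<^sub>R br v B4) + ((fu 0 0 0 a0 k1 t * fx a0 0 0 k1 t) *\<^sub>R br B0 B0 + (fu 0 0 0 a0 k1 t * fx 0 a1 (-a2) k1 t) *\<^sub>R br B0 B1 + (fu 0 0 0 a0 k1 t * fx 0 a2 a1 k1 t) *\<^sub>R br B0 B2 + (fu 0 0 0 a0 k1 t * fx 0 a3 (-a4) k2 t) *\<^sub>R br B0 B3 + (fu 0 0 0 a0 k1 t * fx 0 a4 a3 k2 t) *\<^sub>R br B0 B4 + (fu (-a2/k1) (a2/k1) (a1/k1) 0 k1 t * fx a0 0 0 k1 t) *\<^sub>R br B1 B0 + (fu (-a2/k1) (a2/k1) (a1/k1) 0 k1 t * fx 0 a1 (-a2) k1 t) *\<^sub>R br B1 B1 + (fu (-a2/k1) (a2/k1) (a1/k1) 0 k1 t * fx 0 a2 a1 k1 t) *\<^sub>R br B1 B2 + (fu (-a2/k1) (a2/k1) (a1/k1) 0 k1 t * fx 0 a3 (-a4) k2 t) *\<^sub>R br B1 B3 + (fu (-a2/k1) (a2/k1) (a1/k1) 0 k1 t * fx 0 a4 a3 k2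 t) *\<^sub>R br B1 B4 + (fu (a1/k1) (-a1/k1) (a2/k1) 0 k1 t * fx a0 0 0 k1 t) *\<^sub>R br B2 B0 + (fu (a1/k1) (-a1/k1) (a2/k1) 0 k1 t * fx 0 a1 (-a2) k1 t) *\<^sub>R br B2 B1 + (fu (a1/k1) (-a1/k1) (a2/k1) 0 k1 t * fx 0 a2 a1 k1 t) *\<^sub>R br B2 B2 + (fu (a1/k1) (-a1/k1) (a2/k1) 0 k1 t * fx 0 a3 (-a4) k2 t) *\<^sub>R br B2 B3 + (fu (a1/k1) (-a1/k1) (a2/k1) 0 k1 t * fx 0 a4 a3 k2 t) *\<^sub>R br B2 B4 + (fu (-a4/k2) (a4/k2) (a3/k2) 0 k2 t * fx a0 0 0 k1 t) *\<^sub>R br B3 B0 + (fu (-a4/k2) (a4/k2) (a3/k2) 0 k2 t * fx 0 a1 (-a2) k1 t) *\<^sub>R br B3 B1 + (fu (-a4/k2) (a4/k2) (a3/k2) 0 k2 t * fx 0 a2 a1 k1 t) *\<^sub>R br B3 B2 + (fu (-a4/k2) (a4/k2) (a3/k2) 0 k2 t * fx 0 a3 (-a4) k2 t) *\<^sub>R br B3 B3 + (fu (-a4/k2) (a4/k2) (a3/k2) 0 k2 t * fx 0 a4 a3 k2 t) *\<^sub>R br B3 B4 + (fu (a3/k2) (-a3/k2) (a4/k2) 0 k2 t * fx a0 0 0 k1 t) *\<^sub>R br B4 B0 + (fu (a3/k2) (-a3/k2) (a4/k2) 0 k2 t * fx 0 a1 (-a2) k1 t) *\<^sub>R br B4 B1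 + (fu (a3/k2) (-a3/k2) (a4/k2) 0 k2 t * fx 0 a2 a1 k1 t) *\<^sub>R br B4 B2 + (fu (a3/k2) (-a3/k2) (a4/k2) 0 k2 t * fx 0 a3 (-a4) k2 t) *\<^sub>R br B4 B3 + (fu (a3/k2) (-a3/k2) (a4/k2) 0 k2 t * fx 0 a4 a3 k2 t) *\<^sub>R br B4 B4))) (\<tau> *\<^sub>R Z + (1/2) *\<^sub>R (((\<tau>*a0) *\<^sub>R br v B0 + (\<tau>*0) *\<^sub>R br v B1 + (\<tau>*0) *\<^sub>R br v B2 + (\<tau>*0) *\<^sub>R br v B3 + (\<tau>*0) *\<^sub>R br v B4) + ((vS 0 0 0 a0 a0 0 0 k1 \<tau>) *\<^sub>R br B0 B0 + (vS 0 0 0 a0 0 a1 (-a2) k1 \<tau>) *\<^sub>R br B0 B1 + (vS 0 0 0 a0 0 a2 a1 k1 \<tau>) *\<^sub>R br B0 B2 + (vC 0 a0 0 (-a4) k2 \<tau>) *\<^sub>R br B0 B3 + (vC 0 a0 0 a3 k2 \<tau>) *\<^sub>R br B0 B4 + (vS (-a2/k1) (a2/k1) (a1/k1) 0 a0 0 0 k1 \<tau>) *\<^sub>R br B1 B0 + (vS (-a2/k1) (a2/k1) (a1/k1) 0 0 a1 (-a2) k1 \<tau>) *\<^sub>R br B1 B1 + (vS (-a2/k1) (a2/k1) (a1/k1) 0 0 a2 a1 k1 \<tau>) *\<^sub>R br B1 B2 + (vC (-a2/k1) 0 0 (-a4) k2 \<tau>) *\<^sub>R br B1 B3 + (vC (-a2/k1)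 0 0 a3 k2 \<tau>) *\<^sub>R br B1 B4 + (vS (a1/k1) (-a1/k1) (a2/k1) 0 a0 0 0 k1 \<tau>) *\<^sub>R br B2 B0 + (vS (a1/k1) (-a1/k1) (a2/k1) 0 0 a1 (-a2) k1 \<tau>) *\<^sub>R br B2 B1 + (vS (a1/k1) (-a1/k1) (a2/k1) 0 0 a2 a1 k1 \<tau>) *\<^sub>R br B2 B2 + (vC (a1/k1) 0 0 (-a4) k2 \<tau>) *\<^sub>R br B2 B3 + (vC (a1/k1) 0 0 a3 k2 \<tau>) *\<^sub>R br B2 B4 + (vC (-a4/k2) 0 a0 0 k1 \<tau>) *\<^sub>R br B3 B0 + (vC (-a4/k2) 0 0 (-a2) k1 \<tau>) *\<^sub>R br B3 B1 + (vC (-a4/k2) 0 0 a1 k1 \<tau>) *\<^sub>R br B3 B2 + (vS (-a4/k2) (a4/k2) (a3/k2) 0 0 a3 (-a4) k2 \<tau>) *\<^sub>R br B3 B3 + (vS (-a4/k2) (a4/k2) (a3/k2) 0 0 a4 a3 k2 \<tau>) *\<^sub>R br B3 B4 + (vC (a3/k2) 0 a0 0 k1 \<tau>) *\<^sub>R br B4 B0 + (vC (a3/k2) 0 0 (-a2) k1 \<tau>) *\<^sub>R br B4 B1 + (vC (a3/k2) 0 0 a1 k1 \<tau>) *\<^sub>R br B4 B2 + (vS (a3/k2) (-a3/k2) (a4/k2) 0 0 a3 (-a4) k2 \<tau>) *\<^sub>R br B4 B3 + (vS (a3/k2) (-a3/k2) (a4/k2) 0 0 a4 a3 k2 \<tau>)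 *\<^sub>R br B4 B4)))"
    by (intro ADV_add ADV_const ADV_scaleR ADV_scale AD_same AD_cross AD_fx k1 k2 k12 k12[symmetric] pp)
  then obtain G where dG: "\<And>t. (G has_vector_derivative Z + (1/2) *\<^sub>R ((fx a0 0 0 k1 t *\<^sub>R br v B0 + fx 0 a1 (-a2) k1 t *\<^sub>R br v B1 + fx 0 a2 a1 k1 t *\<^sub>R br v B2 + fx 0 a3 (-a4) k2 t *\<^sub>R br v B3 + fx 0 a4 a3 k2 t *\<^sub>R br v B4) + ((fu 0 0 0 a0 k1 t * fx a0 0 0 k1 t) *\<^sub>R br B0 B0 + (fu 0 0 0 a0 k1 t * fx 0 a1 (-a2) k1 t) *\<^sub>R br B0 B1 + (fu 0 0 0 a0 k1 t * fx 0 a2 a1 k1 t) *\<^sub>R br B0 B2 + (fu 0 0 0 a0 k1 t * fx 0 a3 (-a4) k2 t) *\<^sub>R br B0 B3 + (fu 0 0 0 a0 k1 t * fx 0 a4 a3 k2 t) *\<^sub>R br B0 B4 + (fu (-a2/k1) (a2/k1) (a1/k1) 0 k1 t * fx a0 0 0 k1 t) *\<^sub>R br B1 B0 + (fu (-a2/k1) (a2/k1) (a1/k1) 0 k1 t * fx 0 a1 (-a2) k1 t) *\<^sub>R br B1 B1 + (fu (-a2/k1) (a2/k1) (a1/k1) 0 k1 t * fx 0 a2 a1 k1 t) *\<^sub>R br B1 B2 + (fu (-a2/k1) (a2/k1) (a1/k1) 0 k1 t * fx 0 a3 (-a4) k2 t) *\<^sub>R br B1 B3 + (fu (-a2/k1)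 (a2/k1) (a1/k1) 0 k1 t * fx 0 a4 a3 k2 t) *\<^sub>R br B1 B4 + (fu (a1/k1) (-a1/k1) (a2/k1) 0 k1 t * fx a0 0 0 k1 t) *\<^sub>R br B2 B0 + (fu (a1/k1) (-a1/k1) (a2/k1) 0 k1 t * fx 0 a1 (-a2) k1 t) *\<^sub>R br B2 B1 + (fu (a1/k1) (-a1/k1) (a2/k1) 0 k1 t * fx 0 a2 a1 k1 t) *\<^sub>R br B2 B2 + (fu (a1/k1) (-a1/k1) (a2/k1) 0 k1 t * fx 0 a3 (-a4) k2 t) *\<^sub>R br B2 B3 + (fu (a1/k1) (-a1/k1) (a2/k1) 0 k1 t * fx 0 a4 a3 k2 t) *\<^sub>R br B2 B4 + (fu (-a4/k2) (a4/k2) (a3/k2) 0 k2 t * fx a0 0 0 k1 t) *\<^sub>R br B3 B0 + (fu (-a4/k2) (a4/k2) (a3/k2) 0 k2 t * fx 0 a1 (-a2) k1 t) *\<^sub>R br B3 B1 + (fu (-a4/k2) (a4/k2) (a3/k2) 0 k2 t * fx 0 a2 a1 k1 t) *\<^sub>R br B3 B2 + (fu (-a4/k2) (a4/k2) (a3/k2) 0 k2 t * fx 0 a3 (-a4) k2 t) *\<^sub>R br B3 B3 + (fu (-a4/k2) (a4/k2) (a3/k2) 0 k2 t * fx 0 a4 a3 k2 t) *\<^sub>R br B3 B4 + (fu (a3/k2) (-a3/k2) (a4/k2) 0 k2 t * fx a0 0 0 k1 t) *\<^sub>R br B4 B0 + (fu (a3/k2) (-a3/k2) (a4/k2) 0 k2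 t * fx 0 a1 (-a2) k1 t) *\<^sub>R br B4 B1 + (fu (a3/k2) (-a3/k2) (a4/k2) 0 k2 t * fx 0 a2 a1 k1 t) *\<^sub>R br B4 B2 + (fu (a3/k2) (-a3/k2) (a4/k2) 0 k2 t * fx 0 a3 (-a4) k2 t) *\<^sub>R br B4 B3 + (fu (a3/k2) (-a3/k2) (a4/k2) 0 k2 t * fx 0 a4 a3 k2 t) *\<^sub>R br B4 B4))) (at t)" and G: "G \<tau> - G 0 = \<tau> *\<^sub>R Z + (1/2) *\<^sub>R (((\<tau>*a0) *\<^sub>R br v B0 + (\<tau>*0) *\<^sub>R br v B1 + (\<tau>*0) *\<^sub>R br v B2 + (\<tau>*0) *\<^sub>R br v B3 + (\<tau>*0) *\<^sub>R br v B4) + ((vS 0 0 0 a0 a0 0 0 k1 \<tau>) *\<^sub>R br B0 B0 + (vS 0 0 0 a0 0 a1 (-a2) k1 \<tau>) *\<^sub>R br B0 B1 + (vS 0 0 0 a0 0 a2 a1 k1 \<tau>) *\<^sub>R br B0 B2 + (vC 0 a0 0 (-a4) k2 \<tau>) *\<^sub>R br B0 B3 + (vC 0 a0 0 a3 k2 \<tau>) *\<^sub>R br B0 B4 + (vS (-a2/k1) (a2/k1) (a1/k1) 0 a0 0 0 k1 \<tau>) *\<^sub>R br B1 B0 + (vS (-a2/k1) (a2/k1) (a1/k1) 0 0 a1 (-a2) k1 \<tau>) *\<^sub>R br B1 B1 + (vS (-a2/k1) (a2/k1) (a1/k1) 0 0 a2 a1 k1 \<tau>) *\<^sub>R br B1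 B2 + (vC (-a2/k1) 0 0 (-a4) k2 \<tau>) *\<^sub>R br B1 B3 + (vC (-a2/k1) 0 0 a3 k2 \<tau>) *\<^sub>R br B1 B4 + (vS (a1/k1) (-a1/k1) (a2/k1) 0 a0 0 0 k1 \<tau>) *\<^sub>R br B2 B0 + (vS (a1/k1) (-a1/k1) (a2/k1) 0 0 a1 (-a2) k1 \<tau>) *\<^sub>R br B2 B1 + (vS (a1/k1) (-a1/k1) (a2/k1) 0 0 a2 a1 k1 \<tau>) *\<^sub>R br B2 B2 + (vC (a1/k1) 0 0 (-a4) k2 \<tau>) *\<^sub>R br B2 B3 + (vC (a1/k1) 0 0 a3 k2 \<tau>) *\<^sub>R br B2 B4 + (vC (-a4/k2) 0 a0 0 k1 \<tau>) *\<^sub>R br B3 B0 + (vC (-a4/k2) 0 0 (-a2) k1 \<tau>) *\<^sub>R br B3 B1 + (vC (-a4/k2) 0 0 a1 k1 \<tau>) *\<^sub>R br B3 B2 + (vS (-a4/k2) (a4/k2) (a3/k2) 0 0 a3 (-a4) k2 \<tau>) *\<^sub>R br B3 B3 + (vS (-a4/k2) (a4/k2) (a3/k2) 0 0 a4 a3 k2 \<tau>) *\<^sub>R br B3 B4 + (vC (a3/k2) 0 a0 0 k1 \<tau>) *\<^sub>R br B4 B0 + (vC (a3/k2) 0 0 (-a2) k1 \<tau>) *\<^sub>R br B4 B1 + (vC (a3/k2) 0 0 a1 k1 \<tau>) *\<^sub>R br B4 B2 + (vS (a3/k2) (-a3/k2) (a4/k2) 0 0 a3 (-a4) k2 \<tau>)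 *\<^sub>R br B4 B3 + (vS (a3/k2) (-a3/k2) (a4/k2) 0 0 a4 a3 k2 \<tau>) *\<^sub>R br B4 B4))"
    unfolding ADV_def by blast
  have "snd (\<gamma> \<tau>) - G \<tau> = snd (\<gamma> 0) - G 0"
    by (rule zero_deriv_const) (use has_vector_derivative_diff[OF dsg dG] in simp)
  then have sndg: "snd (\<gamma> \<tau>) = z + (\<tau> *\<^sub>R Z + (1/2) *\<^sub>R (((\<tau>*a0) *\<^sub>R br v B0 + (\<tau>*0) *\<^sub>R br v B1 + (\<tau>*0) *\<^sub>R br v B2 + (\<tau>*0) *\<^sub>R br v B3 + (\<tau>*0) *\<^sub>R br v B4) + ((vS 0 0 0 a0 a0 0 0 k1 \<tau>) *\<^sub>R br B0 B0 + (vS 0 0 0 a0 0 a1 (-a2) k1 \<tau>) *\<^sub>R br B0 B1 + (vS 0 0 0 a0 0 a2 a1 k1 \<tau>) *\<^sub>R br B0 B2 + (vC 0 a0 0 (-a4) k2 \<tau>) *\<^sub>R br B0 B3 + (vC 0 a0 0 a3 k2 \<tau>) *\<^sub>R br B0 B4 + (vS (-a2/k1) (a2/k1) (a1/k1) 0 a0 0 0 k1 \<tau>) *\<^sub>R br B1 B0 + (vS (-a2/k1) (a2/k1) (a1/k1) 0 0 a1 (-a2) k1 \<tau>) *\<^sub>R br B1 B1 + (vS (-a2/k1) (a2/k1) (a1/k1) 0 0 a2 a1 k1 \<tau>) *\<^sub>R br B1 B2 + (vC (-a2/k1) 0 0 (-a4) k2 \<tau>) *\<^sub>R br B1 B3 +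 (vC (-a2/k1) 0 0 a3 k2 \<tau>) *\<^sub>R br B1 B4 + (vS (a1/k1) (-a1/k1) (a2/k1) 0 a0 0 0 k1 \<tau>) *\<^sub>R br B2 B0 + (vS (a1/k1) (-a1/k1) (a2/k1) 0 0 a1 (-a2) k1 \<tau>) *\<^sub>R br B2 B1 + (vS (a1/k1) (-a1/k1) (a2/k1) 0 0 a2 a1 k1 \<tau>) *\<^sub>R br B2 B2 + (vC (a1/k1) 0 0 (-a4) k2 \<tau>) *\<^sub>R br B2 B3 + (vC (a1/k1) 0 0 a3 k2 \<tau>) *\<^sub>R br B2 B4 + (vC (-a4/k2) 0 a0 0 k1 \<tau>) *\<^sub>R br B3 B0 + (vC (-a4/k2) 0 0 (-a2) k1 \<tau>) *\<^sub>R br B3 B1 + (vC (-a4/k2) 0 0 a1 k1 \<tau>) *\<^sub>R br B3 B2 + (vS (-a4/k2) (a4/k2) (a3/k2) 0 0 a3 (-a4) k2 \<tau>) *\<^sub>R br B3 B3 + (vS (-a4/k2) (a4/k2) (a3/k2) 0 0 a4 a3 k2 \<tau>) *\<^sub>R br B3 B4 + (vC (a3/k2) 0 a0 0 k1 \<tau>) *\<^sub>R br B4 B0 + (vC (a3/k2) 0 0 (-a2) k1 \<tau>) *\<^sub>R br B4 B1 + (vC (a3/k2) 0 0 a1 k1 \<tau>) *\<^sub>R br B4 B2 + (vS (a3/k2) (-a3/k2) (a4/k2) 0 0 a3 (-a4) k2 \<tau>) *\<^sub>R br B4 B3 + (vS (a3/k2) (-a3/k2) (a4/k2) 0 0 a4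 a3 k2 \<tau>) *\<^sub>R br B4 B4)))" using G init(1) by (simp add: algebra_simps)
  have fstt: "fst (\<gamma> \<tau>) = v + (\<tau>*a0) *\<^sub>R B0" using fstg[of \<tau>] p1 p2 by (simp add: Us_def fu_def lc_def)
  have "gmult br (\<gamma> \<tau>) (ginv (\<gamma> 0)) = ((\<tau>*a0) *\<^sub>R B0, z + (\<tau> *\<^sub>R Z + (1/2) *\<^sub>R (((\<tau>*a0) *\<^sub>R br v B0 + (\<tau>*0) *\<^sub>R br v B1 + (\<tau>*0) *\<^sub>R br v B2 + (\<tau>*0) *\<^sub>R br v B3 + (\<tau>*0) *\<^sub>R br v B4) + ((vS 0 0 0 a0 a0 0 0 k1 \<tau>) *\<^sub>R br B0 B0 + (vS 0 0 0 a0 0 a1 (-a2) k1 \<tau>) *\<^sub>R br B0 B1 + (vS 0 0 0 a0 0 a2 a1 k1 \<tau>) *\<^sub>R br B0 B2 + (vC 0 a0 0 (-a4) k2 \<tau>) *\<^sub>R br B0 B3 + (vC 0 a0 0 a3 k2 \<tau>) *\<^sub>R br B0 B4 + (vS (-a2/k1) (a2/k1) (a1/k1) 0 a0 0 0 k1 \<tau>) *\<^sub>R br B1 B0 + (vS (-a2/k1) (a2/k1) (a1/k1) 0 0 a1 (-a2) k1 \<tau>) *\<^sub>R br B1 B1 + (vS (-a2/k1) (a2/k1) (a1/k1) 0 0 a2 a1 k1 \<tau>) *\<^sub>R br B1 B2 + (vC (-a2/k1) 0 0 (-a4) k2 \<tau>) *\<^sub>R br B1 B3 + (vC (-a2/k1)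 0 0 a3 k2 \<tau>) *\<^sub>R br B1 B4 + (vS (a1/k1) (-a1/k1) (a2/k1) 0 a0 0 0 k1 \<tau>) *\<^sub>R br B2 B0 + (vS (a1/k1) (-a1/k1) (a2/k1) 0 0 a1 (-a2) k1 \<tau>) *\<^sub>R br B2 B1 + (vS (a1/k1) (-a1/k1) (a2/k1) 0 0 a2 a1 k1 \<tau>) *\<^sub>R br B2 B2 + (vC (a1/k1) 0 0 (-a4) k2 \<tau>) *\<^sub>R br B2 B3 + (vC (a1/k1) 0 0 a3 k2 \<tau>) *\<^sub>R br B2 B4 + (vC (-a4/k2) 0 a0 0 k1 \<tau>) *\<^sub>R br B3 B0 + (vC (-a4/k2) 0 0 (-a2) k1 \<tau>) *\<^sub>R br B3 B1 + (vC (-a4/k2) 0 0 a1 k1 \<tau>) *\<^sub>R br B3 B2 + (vS (-a4/k2) (a4/k2) (a3/k2) 0 0 a3 (-a4) k2 \<tau>) *\<^sub>R br B3 B3 + (vS (-a4/k2) (a4/k2) (a3/k2) 0 0 a4 a3 k2 \<tau>) *\<^sub>R br B3 B4 + (vC (a3/k2) 0 a0 0 k1 \<tau>) *\<^sub>R br B4 B0 + (vC (a3/k2) 0 0 (-a2) k1 \<tau>) *\<^sub>R br B4 B1 + (vC (a3/k2) 0 0 a1 k1 \<tau>) *\<^sub>R br B4 B2 + (vS (a3/k2) (-a3/k2) (a4/k2) 0 0 a3 (-a4) k2 \<tau>) *\<^sub>R br B4 B3 + (vS (a3/k2) (-a3/k2) (a4/k2) 0 0 a4 a3 k2 \<tau>)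 *\<^sub>R br B4 B4))) - z + (1/2) *\<^sub>R br (v + (\<tau>*a0) *\<^sub>R B0) (-v))"
    unfolding gmult_def ginv_def using fstt sndg init(1) by simp
  also have "\<dots> = ((\<tau>*a0) *\<^sub>R B0,
      \<tau> *\<^sub>R Z + (\<tau>*a0) *\<^sub>R br v B0 + (\<tau>*a0*a2/k1) *\<^sub>R br B0 B1 - (\<tau>*a0*a1/k1) *\<^sub>R br B0 B2
      + (\<tau>*a0*a4/k2) *\<^sub>R br B0 B3 - (\<tau>*a0*a3/k2) *\<^sub>R br B0 B4
      + (\<tau>*(a1^2+a2^2)/(2*k1)) *\<^sub>R br B1 B2 + (\<tau>*(a3^2+a4^2)/(2*k2)) *\<^sub>R br B3 B4)"
  proof -
    have an: "br B1 B0 = - br B0 B1" "br B2 B0 = - br B0 B2" "br B3 B0 = - br B0 B3" "br B4 B0 = - br B0 B4"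
      "br B2 B1 = - br B1 B2" "br B3 B1 = - br B1 B3" "br B4 B1 = - br B1 B4"
      "br B3 B2 = - br B2 B3" "br B4 B2 = - br B2 B4" "br B4 B3 = - br B3 B4"
      "br B0 v = - br v B0"
      by (rule br_anti)+
    show ?thesis
      using k1 k2
      by (simp add: an br_self br_add br_scale br_minus2 br_add2 vS_def vC_def vec3_eq field_simps power2_eq_square)
  qed
  finally show ?thesis using p1 p2 by simp
qed

end



lemma caseN:
  fixes ci cj ck \<tau> \<beta> \<alpha>1 \<alpha>2 \<alpha>3 \<alpha>4 :: real
    and V v :: "real^5" and z :: "real^3"
    and \<gamma> :: "real \<Rightarrow> (real^5) \<times> (real^3)"
  defines "Z \<equiv> Zc ci cj ck"
  assumes gen: "norm Z > \<bar>ck\<bar>" "\<bar>ck\<bar> > 0"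
    and gen_ck: "Vcomp brN Z ck V \<noteq> 0"
    and gen_c: "Vcomp brN Z (norm Z) V \<noteq> 0"
    and geo: "geodesic brN \<gamma>"
    and init: "\<gamma> 0 = (v, z)" "vel brN \<gamma> 0 = (V, Z)"
    and tau: "vel brN \<gamma> \<tau> = (V, Z)"
    and beta: "Vcomp brN Z 0 V = \<beta> *\<^sub>R Yv ci cj ck"
    and alpha: "Vcomp brN Z ck V + Vcomp brN Z (norm Z) V =
          \<alpha>1 *\<^sub>R E1 ci cj ck + \<alpha>2 *\<^sub>R E2 ci cj ck + \<alpha>3 *\<^sub>R E3 ci cj ck + \<alpha>4 *\<^sub>R E4 ci cj ck"
  shows "(\<exists>n::int. \<tau> * ck = 2 * pi * n) \<and> (\<exists>n::int. \<tau> * norm Z = 2 * pi * n) \<and>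
    gmult brN (\<gamma> \<tau>) (ginv (\<gamma> 0)) =
      (\<tau> *\<^sub>R Vcomp brN Z 0 V,
         (\<tau> * (1 + (norm (Vcomp brN Z ck V + Vcomp brN Z (norm Z) V))^2 / (2 * (norm Z)^2))) *\<^sub>R Z
       + (\<tau> * \<beta> * (\<alpha>2 - ck / (ci^2 + cj^2) * (v$1 * ci + v$2 * cj)))
         *\<^sub>R vector [- cj, ci, 0]
       + (\<tau> * (- ((norm (Vcomp brN Z ck V))^2 / (2 * ck * (norm Z)^2))
              + \<beta> * (\<alpha>4 - (v$1 * cj - v$2 * ci) / (ci^2 + cj^2))))
         *\<^sub>R vector [ck * ci, ck * cj, - (ci^2 + cj^2)])"
proof -
  define r where "r = norm Z"
  have Zc: "Z = vector [ci, cj, ck]" by (simp add: Z_def Zc_def)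
  have r2: "r^2 = ci^2+cj^2+ck^2" unfolding r_def power2_norm_eq_inner
    by (simp add: Zc inner3 power2_eq_square)
  have ck0: "ck \<noteq> 0" using gen by auto
  have rpos: "r > 0" using gen r_def by auto
  have "\<bar>ck\<bar>^2 < r^2" using gen r_def by (intro power_strict_mono) auto
  then have ckr: "ck^2 < r^2" by simp
  then have s0: "ci^2 + cj^2 > 0" using r2 by simp
  have cij: "ci \<noteq> 0 \<or> cj \<noteq> 0" using s0 by auto
  have k12: "ck^2 \<noteq> r^2" using ckr by simp
  have E3r: "E3 ci cj ck = r *\<^sub>R vector [cj, -ci, 0, 0, 0]" by (simp add: E3_def r_def Z_def)
  interpret fr: frame brN JN Z ck r "Yv ci cj ck" "E1 ci cj ck" "E2 ci cj ck" "E3 ci cj ck" "E4 ci cj ck"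
  proof unfold_locales
    show "inner (JN Z X) Y = inner Z (brN X Y)" for Z X Y by (rule JN_inner)
    show "brN (x + y) w = brN x w + brN y w" for x y w by (rule brN_bil)
    show "brN (c *\<^sub>R x) w = c *\<^sub>R brN x w" for c x w by (rule brN_bil)
    show "brN x y = - brN y x" for x y by (rule brN_bil)
    show "JN Z (Yv ci cj ck) = 0" by (simp add: JN_def Zc Yv_def vec5_eq)
    show "JN Z (E1 ci cj ck) = ck *\<^sub>R E2 ci cj ck" by (simp add: JN_def Zc E1_def E2_def vec5_eq)
    show "JN Z (E2 ci cj ck) = - ck *\<^sub>R E1 ci cj ck" by (simp add: JN_def Zc E1_def E2_def vec5_eq)
    show "JN Z (E3 ci cj ck) = r *\<^sub>R E4 ci cj ck" by (simp add: JN_def Zc E3r E4_def vec5_eq algebra_simps power2_eq_square)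
    show "JN Z (E4 ci cj ck) = - r *\<^sub>R E3 ci cj ck"
      using r2 by (simp add: JN_def Zc E3r E4_def vec5_eq algebra_simps power2_eq_square)
    show "inner (Yv ci cj ck) (E1 ci cj ck) = 0" "inner (Yv ci cj ck) (E2 ci cj ck) = 0"
      "inner (Yv ci cj ck) (E3 ci cj ck) = 0" "inner (Yv ci cj ck) (E4 ci cj ck) = 0"
      "inner (E1 ci cj ck) (E2 ci cj ck) = 0" "inner (E1 ci cj ck) (E3 ci cj ck) = 0"
      "inner (E1 ci cj ck) (E4 ci cj ck) = 0" "inner (E2 ci cj ck) (E3 ci cj ck) = 0"
      "inner (E2 ci cj ck) (E4 ci cj ck) = 0" "inner (E3 ci cj ck) (E4 ci cj ck) = 0"
      by (simp_all add: inner5 Yv_def E1_def E2_def E3r E4_def algebra_simps power2_eq_square)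
    show "Yv ci cj ck \<noteq> 0" "E1 ci cj ck \<noteq> 0" "E2 ci cj ck \<noteq> 0" "E3 ci cj ck \<noteq> 0" "E4 ci cj ck \<noteq> 0"
      using ck0 cij rpos s0 by (auto simp: vec5_eq Yv_def E1_def E2_def E3r E4_def)
    show "ck \<noteq> 0" "r \<noteq> 0" "ck^2 \<noteq> r^2" using ck0 rpos k12 by auto
  qed
  define s where "s = ci^2 + cj^2"
  have "s + ck^2 > 0" using s0 s_def by (simp add: add_pos_nonneg)
  then have s0': "s \<noteq> 0" "s + ck^2 \<noteq> 0" using s0 s_def by auto
  define p where "p = 1/s"
  define q where "q = 1/(s+ck^2)"
  define ir where "ir = 1/r"
  have pq: "p * s = 1" "q*(s+ck^2) = 1" "ir*r = 1" "s = ci^2 + cj^2"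
    using s0' rpos by (simp_all add: p_def q_def ir_def s_def)
  define a0 where "a0 = (V$3*ci + V$4*cj + V$5*ck)*q"
  define a1 where "a1 = (V$1*ci + V$2*cj)*p"
  define a2 where "a2 = (V$4*ci - V$3*cj)*p"
  define a3 where "a3 = (V$1*cj - V$2*ci)*p*ir"
  define a4 where "a4 = (ck*(ci*V$3 + cj*V$4) - s * V$5)*p*q"
  have Vd: "V = fr.L a0 a1 a2 a3 a4"
    unfolding vec5_eq
    apply (simp add: lc_def a0_def a1_def a2_def a3_def a4_def Yv_def E1_def E2_def E3r E4_def)
    using pq by algebra
  note Vc = fr.Vcomps[OF Vd]
  have Y0: "Yv ci cj ck \<noteq> 0" by (rule fr.nz0)
  have b: "a0 = \<beta>" using beta Vc(3) Y0 by simp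
  have "fr.L 0 a1 a2 a3 a4 = fr.L 0 \<alpha>1 \<alpha>2 \<alpha>3 \<alpha>4"
    using alpha Vc(1,2) r_def by (simp add: lc_def algebra_simps)
  then have al: "a1 = \<alpha>1" "a2 = \<alpha>2" "a3 = \<alpha>3" "a4 = \<alpha>4" using fr.L_eq by blast+
  have Vd': "V = fr.L \<beta> \<alpha>1 \<alpha>2 \<alpha>3 \<alpha>4" using Vd b al by simp
  have Vc1: "Vcomp brN Z ck V = \<alpha>1 *\<^sub>R E1 ci cj ck + \<alpha>2 *\<^sub>R E2 ci cj ck" using Vc al by simp
  have Vc2: "Vcomp brN Z r V = \<alpha>3 *\<^sub>R E3 ci cj ck + \<alpha>4 *\<^sub>R E4 ci cj ck" using Vc al by simp
  have Vc0: "Vcomp brN Z 0 V = \<beta> *\<^sub>R Yv ci cj ck" using beta .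
  have nz12: "\<alpha>1 *\<^sub>R E1 ci cj ck + \<alpha>2 *\<^sub>R E2 ci cj ck \<noteq> 0" using gen_ck Vc1 by simp
  have nz34: "\<alpha>3 *\<^sub>R E3 ci cj ck + \<alpha>4 *\<^sub>R E4 ci cj ck \<noteq> 0" using gen_c Vc2 r_def by simp
  note M = fr.geo_main[OF geo init tau Vd' nz12 nz34]
  have per1: "\<exists>n::int. \<tau> * ck = 2 * pi * n"
    using M cos_one_2pi_int[of "ck*\<tau>"] by (auto simp: algebra_simps)
  have per2: "\<exists>n::int. \<tau> * norm Z = 2 * pi * n"
    using M cos_one_2pi_int[of "r*\<tau>"] r_def by (auto simp: algebra_simps)
  have n1: "(norm (\<alpha>1 *\<^sub>R E1 ci cj ck + \<alpha>2 *\<^sub>R E2 ci cj ck))^2 = s*(\<alpha>1^2+\<alpha>2^2)"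
    unfolding power2_norm_eq_inner by (simp add: inner5 E1_def E2_def s_def algebra_simps power2_eq_square)
  have n2: "(norm (\<alpha>1 *\<^sub>R E1 ci cj ck + \<alpha>2 *\<^sub>R E2 ci cj ck + (\<alpha>3 *\<^sub>R E3 ci cj ck + \<alpha>4 *\<^sub>R E4 ci cj ck)))^2
      = s*(\<alpha>1^2+\<alpha>2^2) + r^2 * s *(\<alpha>3^2+\<alpha>4^2)"
    unfolding power2_norm_eq_inner using r2
    by (simp add: inner5 E1_def E2_def E3r E4_def s_def algebra_simps power2_eq_square)
  have cs: "ci^2 + cj^2 \<noteq> 0" using s0 by linarith
  have r0: "r \<noteq> 0" using rpos by simp
  define ick where "ick = 1/ck"
  have inv: "ick*ck = 1" "ir*r = 1" "p * s = 1" "s = ci^2+cj^2" "r^2 = s + ck^2"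
    using ck0 pq r2 by (simp_all add: ick_def s_def)
  have e: "\<tau>*\<beta>*\<alpha>2/ck = \<tau>*\<beta>*\<alpha>2*ick" "\<tau>*\<beta>*\<alpha>1/ck = \<tau>*\<beta>*\<alpha>1*ick"
    "\<tau>*\<beta>*\<alpha>4/r = \<tau>*\<beta>*\<alpha>4*ir" "\<tau>*\<beta>*\<alpha>3/r = \<tau>*\<beta>*\<alpha>3*ir"
    "\<tau>*(\<alpha>1^2+\<alpha>2^2)/(2*ck) = \<tau>*(\<alpha>1^2+\<alpha>2^2)*ick/2"
    "\<tau>*(\<alpha>3^2+\<alpha>4^2)/(2*r) = \<tau>*(\<alpha>3^2+\<alpha>4^2)*ir/2"
    "(s*(\<alpha>1^2+\<alpha>2^2) + r^2 * s *(\<alpha>3^2+\<alpha>4^2)) / (2 * r^2) = (s*(\<alpha>1^2+\<alpha>2^2) + r^2 * s *(\<alpha>3^2+\<alpha>4^2))*ir*ir/2"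
    "ck / (ci^2 + cj^2) = ck * p"
    "(v$1 * cj - v$2 * ci) / (ci^2 + cj^2) = (v$1 * cj - v$2 * ci) * p"
    "(s*(\<alpha>1^2+\<alpha>2^2)) / (2 * ck * r^2) = (s*(\<alpha>1^2+\<alpha>2^2))*ick*ir*ir/2"
    by (simp_all add: ick_def ir_def p_def s_def power2_eq_square)
  have fin: "\<tau> *\<^sub>R Z + (\<tau>*\<beta>) *\<^sub>R brN v (Yv ci cj ck) + (\<tau>*\<beta>*\<alpha>2/ck) *\<^sub>R brN (Yv ci cj ck) (E1 ci cj ck)
      - (\<tau>*\<beta>*\<alpha>1/ck) *\<^sub>R brN (Yv ci cj ck) (E2 ci cj ck)
      + (\<tau>*\<beta>*\<alpha>4/r) *\<^sub>R brN (Yv ci cj ck) (E3 ci cj ck) - (\<tau>*\<beta>*\<alpha>3/r) *\<^sub>R brN (Yv ci cj ck) (E4 ci cj ck)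
      + (\<tau>*(\<alpha>1^2+\<alpha>2^2)/(2*ck)) *\<^sub>R brN (E1 ci cj ck) (E2 ci cj ck)
      + (\<tau>*(\<alpha>3^2+\<alpha>4^2)/(2*r)) *\<^sub>R brN (E3 ci cj ck) (E4 ci cj ck) =
         (\<tau> * (1 + (s*(\<alpha>1^2+\<alpha>2^2) + r^2 * s *(\<alpha>3^2+\<alpha>4^2)) / (2 * r^2))) *\<^sub>R Z
       + (\<tau> * \<beta> * (\<alpha>2 - ck / (ci^2 + cj^2) * (v$1 * ci + v$2 * cj)))
         *\<^sub>R vector [- cj, ci, 0]
       + (\<tau> * (- ((s*(\<alpha>1^2+\<alpha>2^2)) / (2 * ck * r^2))
              + \<beta> * (\<alpha>4 - (v$1 * cj - v$2 * ci) / (ci^2 + cj^2))))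
         *\<^sub>R vector [ck * ci, ck * cj, - (ci^2 + cj^2)]"
    unfolding e vec3_eq
    apply (simp add: Zc brN_def Yv_def E1_def E2_def E3r E4_def)
    using inv apply algebra
    done
  show ?thesis
    using per1 per2 M fin n1 n2 Vc0 Vc1 Vc2 unfolding r_def by simp
qed

lemma caseN':
  fixes ci cj ck \<tau> \<beta> \<alpha>1 \<alpha>2 \<alpha>3 \<alpha>4 :: real
    and V v :: "real^5" and z :: "real^3"
    and \<gamma> :: "real \<Rightarrow> (real^5) \<times> (real^3)"
  defines "Z \<equiv> Zc ci cj ck"
  assumes gen: "norm Z > \<bar>ck\<bar>" "\<bar>ck\<bar> > 0"
    and gen_ck: "Vcomp brN' Z ck V \<noteq> 0"
    and gen_c: "Vcomp brN' Z (norm Z) V \<noteq> 0"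
    and geo: "geodesic brN' \<gamma>"
    and init: "\<gamma> 0 = (v, z)" "vel brN' \<gamma> 0 = (V, Z)"
    and tau: "vel brN' \<gamma> \<tau> = (V, Z)"
    and beta: "Vcomp brN' Z 0 V = \<beta> *\<^sub>R Yv ci cj ck"
    and alpha: "Vcomp brN' Z ck V + Vcomp brN' Z (norm Z) V =
          \<alpha>1 *\<^sub>R E1' ci cj ck + \<alpha>2 *\<^sub>R E2' ci cj ck + \<alpha>3 *\<^sub>R E3' ci cj ck + \<alpha>4 *\<^sub>R E4' ci cj ck"
  shows "(\<exists>n::int. \<tau> * ck = 2 * pi * n) \<and> (\<exists>n::int. \<tau> * norm Z = 2 * pi * n) \<and>
    gmult brN' (\<gamma> \<tau>) (ginv (\<gamma> 0)) =
      (\<tau> *\<^sub>R Vcomp brN' Z 0 V,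
         (\<tau> * (1 + (norm (Vcomp brN' Z ck V + Vcomp brN' Z (norm Z) V))^2 / (2 * (norm Z)^2))) *\<^sub>R Z
       + (\<tau> * \<beta> * (- norm Z * \<alpha>3 + v$5 - ck / (ci^2 + cj^2) * (v$3 * ci + v$4 * cj)))
         *\<^sub>R vector [- cj, ci, 0]
       + (\<tau> * (- ((norm (Vcomp brN' Z ck V))^2 / (2 * ck * (norm Z)^2))
              + \<beta> * (\<alpha>4 - (v$3 * cj - v$4 * ci) / (ci^2 + cj^2))))
         *\<^sub>R vector [ck * ci, ck * cj, - (ci^2 + cj^2)])"
proof -
  define r where "r = norm Z"
  have Zc: "Z = vector [ci, cj, ck]" by (simp add: Z_def Zc_def)
  have r2: "r^2 = ci^2+cj^2+ck^2" unfolding r_def power2_norm_eq_inner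
    by (simp add: Zc inner3 power2_eq_square)
  have ck0: "ck \<noteq> 0" using gen by auto
  have rpos: "r > 0" using gen r_def by auto
  have "\<bar>ck\<bar>^2 < r^2" using gen r_def by (intro power_strict_mono) auto
  then have ckr: "ck^2 < r^2" by simp
  then have s0: "ci^2 + cj^2 > 0" using r2 by simp
  have cij: "ci \<noteq> 0 \<or> cj \<noteq> 0" using s0 by auto
  have k12: "ck^2 \<noteq> r^2" using ckr by simp
  have E3r: "E3' ci cj ck = r *\<^sub>R vector [0, 0, cj, -ci, 0]" by (simp add: E3'_def r_def Z_def)
  interpret fr: frame brN' JN' Z ck r "Yv ci cj ck" "E1' ci cj ck" "E2' ci cj ck" "E3' ci cj ck" "E4' ci cj ck"
  proof unfold_locales
    show "inner (JN' Z X) Y = inner Z (brN' X Y)" for Z X Y by (rule JN'_inner)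
    show "brN' (x + y) w = brN' x w + brN' y w" for x y w by (rule brN'_bil)
    show "brN' (c *\<^sub>R x) w = c *\<^sub>R brN' x w" for c x w by (rule brN'_bil)
    show "brN' x y = - brN' y x" for x y by (rule brN'_bil)
    show "JN' Z (Yv ci cj ck) = 0" by (simp add: JN'_def Zc Yv_def vec5_eq)
    show "JN' Z (E1' ci cj ck) = ck *\<^sub>R E2' ci cj ck" by (simp add: JN'_def Zc E1'_def E2'_def vec5_eq)
    show "JN' Z (E2' ci cj ck) = - ck *\<^sub>R E1' ci cj ck" by (simp add: JN'_def Zc E1'_def E2'_def vec5_eq)
    show "JN' Z (E3' ci cj ck) = r *\<^sub>R E4' ci cj ck" by (simp add: JN'_def Zc E3r E4'_def vec5_eq algebra_simps power2_eq_square)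
    show "JN' Z (E4' ci cj ck) = - r *\<^sub>R E3' ci cj ck"
      using r2 by (simp add: JN'_def Zc E3r E4'_def vec5_eq algebra_simps power2_eq_square)
    show "inner (Yv ci cj ck) (E1' ci cj ck) = 0" "inner (Yv ci cj ck) (E2' ci cj ck) = 0"
      "inner (Yv ci cj ck) (E3' ci cj ck) = 0" "inner (Yv ci cj ck) (E4' ci cj ck) = 0"
      "inner (E1' ci cj ck) (E2' ci cj ck) = 0" "inner (E1' ci cj ck) (E3' ci cj ck) = 0"
      "inner (E1' ci cj ck) (E4' ci cj ck) = 0" "inner (E2' ci cj ck) (E3' ci cj ck) = 0"
      "inner (E2' ci cj ck) (E4' ci cj ck) = 0" "inner (E3' ci cj ck) (E4' ci cj ck) = 0"
      by (simp_all add: inner5 Yv_def E1'_def E2'_def E3r E4'_def algebra_simps power2_eq_square)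
    show "Yv ci cj ck \<noteq> 0" "E1' ci cj ck \<noteq> 0" "E2' ci cj ck \<noteq> 0" "E3' ci cj ck \<noteq> 0" "E4' ci cj ck \<noteq> 0"
      using ck0 cij rpos s0 by (auto simp: vec5_eq Yv_def E1'_def E2'_def E3r E4'_def)
    show "ck \<noteq> 0" "r \<noteq> 0" "ck^2 \<noteq> r^2" using ck0 rpos k12 by auto
  qed
  define s where "s = ci^2 + cj^2"
  have "s + ck^2 > 0" using s0 s_def by (simp add: add_pos_nonneg)
  then have s0': "s \<noteq> 0" "s + ck^2 \<noteq> 0" using s0 s_def by auto
  define p where "p = 1/s"
  define q where "q = 1/(s+ck^2)"
  define ir where "ir = 1/r"
  have pq: "p * s = 1" "q*(s+ck^2) = 1" "ir*r = 1" "s = ci^2 + cj^2"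
    using s0' rpos by (simp_all add: p_def q_def ir_def s_def)
  define a0 where "a0 = (V$3*ci + V$4*cj + V$5*ck)*q"
  define a1 where "a1 = V$1"
  define a2 where "a2 = V$2"
  define a3 where "a3 = (V$3*cj - V$4*ci)*p*ir"
  define a4 where "a4 = (ck*(ci*V$3 + cj*V$4) - s * V$5)*p*q"
  have Vd: "V = fr.L a0 a1 a2 a3 a4"
    unfolding vec5_eq
    apply (simp add: lc_def a0_def a1_def a2_def a3_def a4_def Yv_def E1'_def E2'_def E3r E4'_def)
    using pq by algebra
  note Vc = fr.Vcomps[OF Vd]
  have Y0: "Yv ci cj ck \<noteq> 0" by (rule fr.nz0)
  have b: "a0 = \<beta>" using beta Vc(3) Y0 by simp
  have "fr.L 0 a1 a2 a3 a4 = fr.L 0 \<alpha>1 \<alpha>2 \<alpha>3 \<alpha>4"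
    using alpha Vc(1,2) r_def by (simp add: lc_def algebra_simps)
  then have al: "a1 = \<alpha>1" "a2 = \<alpha>2" "a3 = \<alpha>3" "a4 = \<alpha>4" using fr.L_eq by blast+
  have Vd': "V = fr.L \<beta> \<alpha>1 \<alpha>2 \<alpha>3 \<alpha>4" using Vd b al by simp
  have Vc1: "Vcomp brN' Z ck V = \<alpha>1 *\<^sub>R E1' ci cj ck + \<alpha>2 *\<^sub>R E2' ci cj ck" using Vc al by simp
  have Vc2: "Vcomp brN' Z r V = \<alpha>3 *\<^sub>R E3' ci cj ck + \<alpha>4 *\<^sub>R E4' ci cj ck" using Vc al by simp
  have Vc0: "Vcomp brN' Z 0 V = \<beta> *\<^sub>R Yv ci cj ck" using beta .
  have nz12: "\<alpha>1 *\<^sub>R E1' ci cj ck + \<alpha>2 *\<^sub>R E2' ci cj ck \<noteq> 0" using gen_ck Vc1 by simp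
  have nz34: "\<alpha>3 *\<^sub>R E3' ci cj ck + \<alpha>4 *\<^sub>R E4' ci cj ck \<noteq> 0" using gen_c Vc2 r_def by simp
  note M = fr.geo_main[OF geo init tau Vd' nz12 nz34]
  have per1: "\<exists>n::int. \<tau> * ck = 2 * pi * n"
    using M cos_one_2pi_int[of "ck*\<tau>"] by (auto simp: algebra_simps)
  have per2: "\<exists>n::int. \<tau> * norm Z = 2 * pi * n"
    using M cos_one_2pi_int[of "r*\<tau>"] r_def by (auto simp: algebra_simps)
  have n1: "(norm (\<alpha>1 *\<^sub>R E1' ci cj ck + \<alpha>2 *\<^sub>R E2' ci cj ck))^2 = (\<alpha>1^2+\<alpha>2^2)"
    unfolding power2_norm_eq_inner by (simp add: inner5 E1'_def E2'_def s_def algebra_simps power2_eq_square)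
  have n2: "(norm (\<alpha>1 *\<^sub>R E1' ci cj ck + \<alpha>2 *\<^sub>R E2' ci cj ck + (\<alpha>3 *\<^sub>R E3' ci cj ck + \<alpha>4 *\<^sub>R E4' ci cj ck)))^2
      = (\<alpha>1^2+\<alpha>2^2) + r^2 * s *(\<alpha>3^2+\<alpha>4^2)"
    unfolding power2_norm_eq_inner using r2
    by (simp add: inner5 E1'_def E2'_def E3r E4'_def s_def algebra_simps power2_eq_square)
  have cs: "ci^2 + cj^2 \<noteq> 0" using s0 by linarith
  have r0: "r \<noteq> 0" using rpos by simp
  define ick where "ick = 1/ck"
  have inv: "ick*ck = 1" "ir*r = 1" "p * s = 1" "s = ci^2+cj^2" "r^2 = s + ck^2"
    using ck0 pq r2 by (simp_all add: ick_def s_def)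
  have e: "\<tau>*\<beta>*\<alpha>2/ck = \<tau>*\<beta>*\<alpha>2*ick" "\<tau>*\<beta>*\<alpha>1/ck = \<tau>*\<beta>*\<alpha>1*ick"
    "\<tau>*\<beta>*\<alpha>4/r = \<tau>*\<beta>*\<alpha>4*ir" "\<tau>*\<beta>*\<alpha>3/r = \<tau>*\<beta>*\<alpha>3*ir"
    "\<tau>*(\<alpha>1^2+\<alpha>2^2)/(2*ck) = \<tau>*(\<alpha>1^2+\<alpha>2^2)*ick/2"
    "\<tau>*(\<alpha>3^2+\<alpha>4^2)/(2*r) = \<tau>*(\<alpha>3^2+\<alpha>4^2)*ir/2"
    "((\<alpha>1^2+\<alpha>2^2) + r^2 * s *(\<alpha>3^2+\<alpha>4^2)) / (2 * r^2) = ((\<alpha>1^2+\<alpha>2^2) + r^2 * s *(\<alpha>3^2+\<alpha>4^2))*ir*ir/2"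
    "ck / (ci^2 + cj^2) = ck * p"
    "(v$3 * cj - v$4 * ci) / (ci^2 + cj^2) = (v$3 * cj - v$4 * ci) * p"
    "((\<alpha>1^2+\<alpha>2^2)) / (2 * ck * r^2) = ((\<alpha>1^2+\<alpha>2^2))*ick*ir*ir/2"
    by (simp_all add: ick_def ir_def p_def s_def power2_eq_square)
  have fin: "\<tau> *\<^sub>R Z + (\<tau>*\<beta>) *\<^sub>R brN' v (Yv ci cj ck) + (\<tau>*\<beta>*\<alpha>2/ck) *\<^sub>R brN' (Yv ci cj ck) (E1' ci cj ck)
      - (\<tau>*\<beta>*\<alpha>1/ck) *\<^sub>R brN' (Yv ci cj ck) (E2' ci cj ck)
      + (\<tau>*\<beta>*\<alpha>4/r) *\<^sub>R brN' (Yv ci cj ck) (E3' ci cj ck) - (\<tau>*\<beta>*\<alpha>3/r) *\<^sub>R brN' (Yv ci cj ck) (E4' ci cj ck)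
      + (\<tau>*(\<alpha>1^2+\<alpha>2^2)/(2*ck)) *\<^sub>R brN' (E1' ci cj ck) (E2' ci cj ck)
      + (\<tau>*(\<alpha>3^2+\<alpha>4^2)/(2*r)) *\<^sub>R brN' (E3' ci cj ck) (E4' ci cj ck) =
         (\<tau> * (1 + ((\<alpha>1^2+\<alpha>2^2) + r^2 * s *(\<alpha>3^2+\<alpha>4^2)) / (2 * r^2))) *\<^sub>R Z
       + (\<tau> * \<beta> * (- r * \<alpha>3 + v$5 - ck / (ci^2 + cj^2) * (v$3 * ci + v$4 * cj)))
         *\<^sub>R vector [- cj, ci, 0]
       + (\<tau> * (- (((\<alpha>1^2+\<alpha>2^2)) / (2 * ck * r^2))
              + \<beta> * (\<alpha>4 - (v$3 * cj - v$4 * ci) / (ci^2 + cj^2))))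
         *\<^sub>R vector [ck * ci, ck * cj, - (ci^2 + cj^2)]"
    unfolding e vec3_eq
    apply (simp add: Zc brN'_def Yv_def E1'_def E2'_def E3r E4'_def)
    using inv apply algebra
    done
  show ?thesis
    using per1 per2 M fin n1 n2 Vc0 Vc1 Vc2 unfolding r_def by simp
qed

theorem lemma5p4:
  fixes primed :: bool  \<comment> \<open>False: the group N with bracket brN; True: N' with brN'\<close>
    and ci cj ck \<tau> \<beta> \<alpha>1 \<alpha>2 \<alpha>3 \<alpha>4 :: real
    and V v :: "real^5" and z :: "real^3"
    and \<gamma> :: "real \<Rightarrow> (real^5) \<times> (real^3)"
  defines "br \<equiv> (if primed then brN' else brN)"
    and "Z \<equiv> Zc ci cj ck"
  assumes gen: "norm Z > \<bar>ck\<bar>" "\<bar>ck\<bar> > 0"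
    and gen_ck: "Vcomp br Z ck V \<noteq> 0"
    and gen_c: "Vcomp br Z (norm Z) V \<noteq> 0"
    and gen_0: "Vcomp br Z 0 V \<noteq> 0"
    and geo: "geodesic br \<gamma>"
    and init: "\<gamma> 0 = (v, z)" "vel br \<gamma> 0 = (V, Z)"
    and tau: "\<tau> > 0" "vel br \<gamma> \<tau> = (V, Z)"
    and beta: "Vcomp br Z 0 V = \<beta> *\<^sub>R Yv ci cj ck"
    and alpha: "Vcomp br Z ck V + Vcomp br Z (norm Z) V =
       (if primed then
          \<alpha>1 *\<^sub>R E1' ci cj ck + \<alpha>2 *\<^sub>R E2' ci cj ck + \<alpha>3 *\<^sub>R E3' ci cj ck + \<alpha>4 *\<^sub>R E4' ci cj ck
        else
          \<alpha>1 *\<^sub>R E1 ci cj ck + \<alpha>2 *\<^sub>R E2 ci cj ck + \<alpha>3 *\<^sub>R E3 ci cj ck + \<alpha>4 *\<^sub>R E4 ci cj ck)"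
  shows "(\<exists>n::int. \<tau> * ck = 2 * pi * n) \<and> (\<exists>n::int. \<tau> * norm Z = 2 * pi * n) \<and>
    gmult br (\<gamma> \<tau>) (ginv (\<gamma> 0)) =
      (\<tau> *\<^sub>R Vcomp br Z 0 V,
         (\<tau> * (1 + (norm (Vcomp br Z ck V + Vcomp br Z (norm Z) V))^2 / (2 * (norm Z)^2))) *\<^sub>R Z
       + (\<tau> * \<beta> *
           (if primed then - norm Z * \<alpha>3 + v$5 - ck / (ci^2 + cj^2) * (v$3 * ci + v$4 * cj)
            else \<alpha>2 - ck / (ci^2 + cj^2) * (v$1 * ci + v$2 * cj)))
         *\<^sub>R vector [- cj, ci, 0]
       + (\<tau> * (- ((norm (Vcomp br Z ck V))^2 / (2 * ck * (norm Z)^2))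
              + \<beta> * (\<alpha>4 - (if primed then (v$3 * cj - v$4 * ci) else (v$1 * cj - v$2 * ci))
                                / (ci^2 + cj^2))))
         *\<^sub>R vector [ck * ci, ck * cj, - (ci^2 + cj^2)])"
  proof -
  have Zd: "Z = Zc ci cj ck" by (simp add: Z_def)
  show ?thesis
  proof (cases primed)
    case True
    then have b: "br = brN'" by (simp add: br_def)
    have al: "Vcomp brN' (Zc ci cj ck) ck V + Vcomp brN' (Zc ci cj ck) (norm (Zc ci cj ck)) V =
          \<alpha>1 *\<^sub>R E1' ci cj ck + \<alpha>2 *\<^sub>R E2' ci cj ck + \<alpha>3 *\<^sub>R E3' ci cj ck + \<alpha>4 *\<^sub>R E4' ci cj ck"
      using alpha True unfolding b Zd by simp
    note c = caseN'[OF gen[unfolded Zd] gen_ck[unfolded b Zd] gen_c[unfolded b Zd] geo[unfolded b]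
        init(1) init(2)[unfolded b Zd] tau(2)[unfolded b Zd] beta[unfolded b Zd] al]
    show ?thesis using c True unfolding b Zd by simp
  next
    case False
    then have b: "br = brN" by (simp add: br_def)
    have al: "Vcomp brN (Zc ci cj ck) ck V + Vcomp brN (Zc ci cj ck) (norm (Zc ci cj ck)) V =
          \<alpha>1 *\<^sub>R E1 ci cj ck + \<alpha>2 *\<^sub>R E2 ci cj ck + \<alpha>3 *\<^sub>R E3 ci cj ck + \<alpha>4 *\<^sub>R E4 ci cj ck"
      using alpha False unfolding b Zd by simp
    note c = caseN[OF gen[unfolded Zd] gen_ck[unfolded b Zd] gen_c[unfolded b Zd] geo[unfolded b]
        init(1) init(2)[unfolded b Zd] tau(2)[unfolded b Zd] beta[unfolded b Zd] al]
    show ?thesis using c False unfolding b Zd by simp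
  qed
qed

end
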